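(* For every $Z\subset X$, the subgroup $K_Z$ is normal in $G_Z$.
   Context: $\Gamma$ is a finite simplicial graph with vertex set $X$, $A_\Gamma$ its right-angled Artin group ($x,y\in X$ commute iff adjacent). $L=X\cup X^{-1}$; for $u\in L$, $\bar u\in X$ is the vertex with $u\in\{\bar u,\bar u^{-1}\}$. $\mathrm{lk}(v)$ is the set of neighbours of $v$, $\mathrm{st}(v)=\mathrm{lk}(v)\cup\{v\}$. Domination: $v\ge w$ iff $\mathrm{lk}(w)\subset\mathrm{st}(v)$; for letters, $u\ge u'$ iff $\bar u\ge\bar u'$. For $u,v\in L$ with $u\ge v$, $\bar u\ne\bar v$, the transvection $\tau_{u,v}$ sends $v\mapsto vu$ and fixes all generators other than $\bar v$. For $u\ge v$, $\bar u\ne\bar v$, $c_{u,\{v\}}$ sends $v\mapsto u^{-1}vu$ and fixes all other generators. For $x,y,c\in L$ with $x,y\ge c$ and $\bar x,\bar y,\bar c$ distinct, $\tau_{[x,y],c}$ sends $c\mapsto c[x,y]$ and fixes all generators other than $\bar c$. For $Z\subset X$: $G_Z\le\mathrm{Aut}\,A_\Gamma$ is generated by the transvections $\tau_{a,b}$ with $a,b\in Z\cup Z^{-1}$, $a\ge b$, $\bar a\ne\bar b$, together with all inner automorphisms; $K_Z$ is generated by all $\tau_{[x,y],c}$ and all $c_{x,\{c\}}$ with $x,y,c\in Z$ and $x,y\ge c$ (distinct where required), together with all inner automorphisms. *)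

theory Defs
  imports "HOL-Algebra.Bij" "HOL-Algebra.Generated_Groups"
begin

text \<open>A letter is a pair (v, b) with v a vertex;
b = False means the generator v, b = True means its inverse.\<close>

type_synonym 'v letter = "'v \<times> bool"
type_synonym 'v word = "'v letter list"

definition letters :: "'v set \<Rightarrow> 'v letter set" where
  "letters X = X \<times> UNIV"

definition inv_letter :: "'v letter \<Rightarrow> 'v letter" where
  "inv_letter a = (fst a, \<not> snd a)"

definition inv_word :: "'v word \<Rightarrow> 'v word" where
  "inv_word w = rev (map inv_letter w)"

definition words :: "'v set \<Rightarrow> 'v word set" where
  "words X = lists (letters X)"

inductive raag_step :: "('v \<Rightarrow> 'v \<Rightarrow> bool) \<Rightarrow> 'v word \<Rightarrow> 'v word \<Rightarrow> bool"
  for E where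
  cancel: "raag_step E (u @ [a, inv_letter a] @ w) (u @ w)"
| swap: "E (fst a) (fst b) \<Longrightarrow> raag_step E (u @ [a, b] @ w) (u @ [b, a] @ w)"

definition raag_rel :: "'v set \<Rightarrow> ('v \<Rightarrow> 'v \<Rightarrow> bool) \<Rightarrow> ('v word \<times> 'v word) set" where
  "raag_rel X E = ({(u, w). u \<in> words X \<and> w \<in> words X \<and> (raag_step E u w \<or> raag_step E w u)})\<^sup>*
                   \<inter> (words X \<times> words X)"

definition RAAG :: "'v set \<Rightarrow> ('v \<Rightarrow> 'v \<Rightarrow> bool) \<Rightarrow> 'v word set monoid" where
  "RAAG X E =
    \<lparr>carrier = words X // raag_rel X E,
     mult = (\<lambda>C D. \<Union>u\<in>C. \<Union>w\<in>D. raag_rel X E `` {u @ w}),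
     one = raag_rel X E `` {[]}\<rparr>"

fun subst_word :: "('v \<Rightarrow> 'v word) \<Rightarrow> 'v word \<Rightarrow> 'v word" where
  "subst_word f [] = []"
| "subst_word f (a # w) = (if snd a then inv_word (f (fst a)) else f (fst a)) @ subst_word f w"

definition induced :: "'v set \<Rightarrow> ('v \<Rightarrow> 'v \<Rightarrow> bool) \<Rightarrow> ('v \<Rightarrow> 'v word) \<Rightarrow> 'v word set \<Rightarrow> 'v word set" where
  "induced X E f = (\<lambda>C \<in> carrier (RAAG X E). \<Union>w\<in>C. raag_rel X E `` {subst_word f w})"

definition send_letter :: "'v letter \<Rightarrow> 'v word \<Rightarrow> 'v \<Rightarrow> 'v word" where
  "send_letter v w = (\<lambda>y. if y = fst v then (if snd v then inv_word w else w) else [(y, False)])"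

definition Aut :: "'v set \<Rightarrow> ('v \<Rightarrow> 'v \<Rightarrow> bool) \<Rightarrow> ('v word set \<Rightarrow> 'v word set) monoid" where
  "Aut X E = AutoGroup (RAAG X E)"

definition inner_auts :: "'v set \<Rightarrow> ('v \<Rightarrow> 'v \<Rightarrow> bool) \<Rightarrow> ('v word set \<Rightarrow> 'v word set) set" where
  "inner_auts X E = {(\<lambda>h \<in> carrier (RAAG X E).
       inv\<^bsub>RAAG X E\<^esub> g \<otimes>\<^bsub>RAAG X E\<^esub> h \<otimes>\<^bsub>RAAG X E\<^esub> g) | g. g \<in> carrier (RAAG X E)}"

definition lk :: "'v set \<Rightarrow> ('v \<Rightarrow> 'v \<Rightarrow> bool) \<Rightarrow> 'v \<Rightarrow> 'v set" where
  "lk X E v = {w \<in> X. E v w}"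

definition st :: "'v set \<Rightarrow> ('v \<Rightarrow> 'v \<Rightarrow> bool) \<Rightarrow> 'v \<Rightarrow> 'v set" where
  "st X E v = insert v (lk X E v)"

definition dominates :: "'v set \<Rightarrow> ('v \<Rightarrow> 'v \<Rightarrow> bool) \<Rightarrow> 'v \<Rightarrow> 'v \<Rightarrow> bool" where
  "dominates X E v w \<longleftrightarrow> lk X E w \<subseteq> st X E v"

definition transvection :: "'v set \<Rightarrow> ('v \<Rightarrow> 'v \<Rightarrow> bool) \<Rightarrow> 'v letter \<Rightarrow> 'v letter \<Rightarrow> 'v word set \<Rightarrow> 'v word set" where
  "transvection X E u v = induced X E (send_letter v [v, u])"

definition pconj :: "'v set \<Rightarrow> ('v \<Rightarrow> 'v \<Rightarrow> bool) \<Rightarrow> 'v letter \<Rightarrow> 'v letter \<Rightarrow> 'v word set \<Rightarrow> 'v word set" where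
  "pconj X E u v = induced X E (send_letter v [inv_letter u, v, u])"

definition comm_transvection :: "'v set \<Rightarrow> ('v \<Rightarrow> 'v \<Rightarrow> bool) \<Rightarrow> 'v letter \<Rightarrow> 'v letter \<Rightarrow> 'v letter \<Rightarrow> 'v word set \<Rightarrow> 'v word set" where
  "comm_transvection X E x y c = induced X E (send_letter c [c, inv_letter x, inv_letter y, x, y])"

definition G_gens :: "'v set \<Rightarrow> ('v \<Rightarrow> 'v \<Rightarrow> bool) \<Rightarrow> 'v set \<Rightarrow> ('v word set \<Rightarrow> 'v word set) set" where
  "G_gens X E Z = {transvection X E a b | a b. a \<in> letters Z \<and> b \<in> letters Z \<and>
                      dominates X E (fst a) (fst b) \<and> fst a \<noteq> fst b} \<union> inner_auts X E"

definition K_gens :: "'v set \<Rightarrow> ('v \<Rightarrow> 'v \<Rightarrow> bool) \<Rightarrow> 'v set \<Rightarrow> ('v word set \<Rightarrow> 'v word set) set" where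
  "K_gens X E Z =
     {comm_transvection X E x y c | x y c. x \<in> letters Z \<and> y \<in> letters Z \<and> c \<in> letters Z \<and>
         dominates X E (fst x) (fst c) \<and> dominates X E (fst y) (fst c) \<and>
         fst x \<noteq> fst y \<and> fst x \<noteq> fst c \<and> fst y \<noteq> fst c}
   \<union> {pconj X E x c | x c. x \<in> letters Z \<and> c \<in> letters Z \<and>
         dominates X E (fst x) (fst c) \<and> fst x \<noteq> fst c}
   \<union> inner_auts X E"

definition G_Z :: "'v set \<Rightarrow> ('v \<Rightarrow> 'v \<Rightarrow> bool) \<Rightarrow> 'v set \<Rightarrow> ('v word set \<Rightarrow> 'v word set) set" where
  "G_Z X E Z = generate (Aut X E) (G_gens X E Z)"

definition K_Z :: "'v set \<Rightarrow> ('v \<Rightarrow> 'v \<Rightarrow> bool) \<Rightarrow> 'v set \<Rightarrow> ('v word set \<Rightarrow> 'v word set) set" where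
  "K_Z X E Z = generate (Aut X E) (K_gens X E Z)"

end

theory Submission
  imports Defs
begin


lemma (in group) cancel_l1: "x \<in> carrier G \<Longrightarrow> y \<in> carrier G \<Longrightarrow> x \<otimes> (inv x \<otimes> y) = y"
  by (simp add: m_assoc[symmetric])
lemma (in group) cancel_l2: "x \<in> carrier G \<Longrightarrow> y \<in> carrier G \<Longrightarrow> inv x \<otimes> (x \<otimes> y) = y"
  by (simp add: m_assoc[symmetric])
lemmas (in group) gs = m_assoc inv_mult_group cancel_l1 cancel_l2

lemma words_Nil[simp]: "[] \<in> words X" by (simp add: words_def)
lemma words_Cons[simp]: "(a # w \<in> words X) = (fst a \<in> X \<and> w \<in> words X)"
  by (cases a) (auto simp: words_def letters_def)
lemma words_append[simp]: "(u @ w \<in> words X) = (u \<in> words X \<and> w \<in> words X)"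
  by (auto simp: words_def)
lemma inv_letter_fst[simp]: "fst (inv_letter a) = fst a" by (simp add: inv_letter_def)
lemma inv_letter_snd[simp]: "snd (inv_letter a) = (\<not> snd a)" by (simp add: inv_letter_def)
lemma inv_letter_inv[simp]: "inv_letter (inv_letter a) = a" by (simp add: inv_letter_def)
lemma inv_word_Nil[simp]: "inv_word [] = []" by (simp add: inv_word_def)
lemma inv_word_Cons[simp]: "inv_word (a # w) = inv_word w @ [inv_letter a]" by (simp add: inv_word_def)
lemma inv_word_append[simp]: "inv_word (u @ w) = inv_word w @ inv_word u" by (simp add: inv_word_def)
lemma inv_word_inv[simp]: "inv_word (inv_word w) = w" by (induct w) auto
lemma inv_word_words[simp]: "(inv_word w \<in> words X) = (w \<in> words X)"
  by (induct w) auto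

definition base_rel :: "'v set \<Rightarrow> ('v \<Rightarrow> 'v \<Rightarrow> bool) \<Rightarrow> ('v word \<times> 'v word) set" where
  "base_rel X E = {(u, w). u \<in> words X \<and> w \<in> words X \<and> (raag_step E u w \<or> raag_step E w u)}"

lemma raag_rel_base: "raag_rel X E = (base_rel X E)\<^sup>* \<inter> (words X \<times> words X)"
  by (simp add: raag_rel_def base_rel_def)

lemma step_app_right: "raag_step E u w \<Longrightarrow> raag_step E (u @ z) (w @ z)"
proof (induction rule: raag_step.induct)
  case (cancel u a w) thus ?case using raag_step.cancel[of E u a "w @ z"] by simp
next
  case (swap a b u w) thus ?case using raag_step.swap[of E a b u "w @ z"] by simp
qed

lemma step_app_left: "raag_step E u w \<Longrightarrow> raag_step E (z @ u) (z @ w)"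
proof (induction rule: raag_step.induct)
  case (cancel u a w) thus ?case using raag_step.cancel[of E "z @ u" a w] by simp
next
  case (swap a b u w) thus ?case using raag_step.swap[of E a b "z @ u" w] by simp
qed

lemma base_sym: "sym (base_rel X E)" by (auto simp: base_rel_def sym_def)

lemma rtr_app: assumes "(u, w) \<in> (base_rel X E)\<^sup>*" "z \<in> words X"
  shows "(u @ z, w @ z) \<in> (base_rel X E)\<^sup>*" "(z @ u, z @ w) \<in> (base_rel X E)\<^sup>*"
  using assms
proof (induction rule: rtrancl_induct)
  case base {case 1 thus ?case by simp next case 2 thus ?case by simp}
next
  case (step y z') 
  {case 1
    have "(y @ z, z' @ z) \<in> base_rel X E" using step(2) 1 
      by (auto simp: base_rel_def intro: step_app_right)
    thus ?case using step.IH(1)[OF 1] by (meson rtrancl.rtrancl_into_rtrancl)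
  next case 2
    have "(z @ y, z @ z') \<in> base_rel X E" using step(2) 2
      by (auto simp: base_rel_def intro: step_app_left)
    thus ?case using step.IH(2)[OF 2] by (meson rtrancl.rtrancl_into_rtrancl)}
qed

lemma equiv_raag: "equiv (words X) (raag_rel X E)"
  unfolding raag_rel_base
proof (rule equivI)
  show "refl_on (words X) ((base_rel X E)\<^sup>* \<inter> words X \<times> words X)"
    by (auto simp: refl_on_def)
  show "sym ((base_rel X E)\<^sup>* \<inter> words X \<times> words X)"
    using sym_rtrancl[OF base_sym[of X E]] by (auto simp: sym_def)
  show "trans ((base_rel X E)\<^sup>* \<inter> words X \<times> words X)"
    by (auto simp: trans_def)
qed auto

lemma raag_rel_words: "(u, w) \<in> raag_rel X E \<Longrightarrow> u \<in> words X \<and> w \<in> words X"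
  by (simp add: raag_rel_base)

lemma raag_rel_app: assumes "(u, w) \<in> raag_rel X E" "z \<in> words X"
  shows "(u @ z, w @ z) \<in> raag_rel X E" "(z @ u, z @ w) \<in> raag_rel X E"
  using assms rtr_app[of u w X E z] by (auto simp: raag_rel_base)

lemma raag_rel_trans: "(u, v) \<in> raag_rel X E \<Longrightarrow> (v, w) \<in> raag_rel X E \<Longrightarrow> (u, w) \<in> raag_rel X E"
  using equiv_raag[of X E] by (meson equivE transE)

lemma raag_rel_sym: "(u, v) \<in> raag_rel X E \<Longrightarrow> (v, u) \<in> raag_rel X E"
  using equiv_raag[of X E] by (meson equivE symE)

lemma raag_rel_refl: "u \<in> words X \<Longrightarrow> (u, u) \<in> raag_rel X E"
  by (simp add: raag_rel_base)

lemma raag_rel_step: "u \<in> words X \<Longrightarrow> w \<in> words X \<Longrightarrow> raag_step E u w \<Longrightarrow> (u, w) \<in> raag_rel X E"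
  by (auto simp: raag_rel_base base_rel_def)

lemma raag_rel_cancel: "w \<in> words X \<Longrightarrow> (w @ inv_word w, []) \<in> raag_rel X E"
proof (induction w)
  case Nil thus ?case by (simp add: raag_rel_refl)
next
  case (Cons a w)
  have 1: "(a # w @ inv_word w @ [inv_letter a], [a] @ [inv_letter a]) \<in> raag_rel X E"
    using raag_rel_app(1)[OF raag_rel_app(2)[OF Cons.IH, of "[a]"], of "[inv_letter a]"] Cons.prems by simp
  have 2: "([a, inv_letter a], []) \<in> raag_rel X E"
    using raag_rel_step[of "[] @ [a, inv_letter a] @ []" X "[] @ []" E] Cons.prems
      raag_step.cancel[of E "[]" a "[]"] by simp
  show ?case using raag_rel_trans[OF 1] 2 by simp
qed

lemma raag_rel_cancel2: "w \<in> words X \<Longrightarrow> (inv_word w @ w, []) \<in> raag_rel X E"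
  using raag_rel_cancel[of "inv_word w" X E] by simp



locale raag =
  fixes X :: "'v set" and E :: "'v \<Rightarrow> 'v \<Rightarrow> bool" and Z :: "'v set"
  assumes E_X: "E x y \<Longrightarrow> x \<in> X \<and> y \<in> X"
    and E_sym: "E x y \<Longrightarrow> E y x"
    and Z_X: "Z \<subseteq> X"
begin

abbreviation "R \<equiv> raag_rel X E"
abbreviation "G \<equiv> RAAG X E"

definition cls :: "'v word \<Rightarrow> 'v word set" where "cls w = R `` {w}"

lemma carrier_G: "carrier G = words X // R" by (simp add: RAAG_def)

lemma cls_carrier[simp]: "w \<in> words X \<Longrightarrow> cls w \<in> carrier G"
  by (simp add: carrier_G cls_def quotientI)

lemma carrier_cls: "C \<in> carrier G \<Longrightarrow> \<exists>w\<in>words X. C = cls w"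
  by (auto simp: carrier_G cls_def quotient_def)

lemma cls_eq: "u \<in> words X \<Longrightarrow> w \<in> words X \<Longrightarrow> (cls u = cls w) = ((u, w) \<in> R)"
  unfolding cls_def by (rule eq_equiv_class_iff[OF equiv_raag])

lemma mem_cls: "(w' \<in> cls w) = ((w, w') \<in> R)" by (simp add: cls_def)

lemma mult_cls: assumes "u \<in> words X" "w \<in> words X"
  shows "cls u \<otimes>\<^bsub>G\<^esub> cls w = cls (u @ w)"
proof -
  have "\<And>u' w'. u' \<in> cls u \<Longrightarrow> w' \<in> cls w \<Longrightarrow> R `` {u' @ w'} = cls (u @ w)"
  proof -
    fix u' w' assume a: "u' \<in> cls u" "w' \<in> cls w"
    hence r: "(u, u') \<in> R" "(w, w') \<in> R" by (auto simp: mem_cls)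
    have "(u @ w, u' @ w) \<in> R" using raag_rel_app(1)[OF r(1)] assms by simp
    moreover have "(u' @ w, u' @ w') \<in> R" using raag_rel_app(2)[OF r(2)] r raag_rel_words by blast
    ultimately have "(u @ w, u' @ w') \<in> R" by (rule raag_rel_trans)
    thus "R `` {u' @ w'} = cls (u @ w)" unfolding cls_def
      by (metis equiv_class_eq[OF equiv_raag] raag_rel_sym)
  qed
  moreover have "u \<in> cls u" "w \<in> cls w" using assms by (auto simp: mem_cls raag_rel_refl)
  ultimately show ?thesis by (auto simp: RAAG_def)
qed

lemma one_G: "\<one>\<^bsub>G\<^esub> = cls []" by (simp add: RAAG_def cls_def)

lemma group_G: "group G"
proof (rule groupI)
  fix x y assume "x \<in> carrier G" "y \<in> carrier G"
  then obtain u w where "u \<in> words X" "w \<in> words X" "x = cls u" "y = cls w" using carrier_cls by blast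
  thus "x \<otimes>\<^bsub>G\<^esub> y \<in> carrier G" by (simp add: mult_cls)
next
  show "\<one>\<^bsub>G\<^esub> \<in> carrier G" by (simp add: one_G)
next
  fix x y z assume "x \<in> carrier G" "y \<in> carrier G" "z \<in> carrier G"
  then obtain u v w where "u \<in> words X" "v \<in> words X" "w \<in> words X" "x = cls u" "y = cls v" "z = cls w"
    using carrier_cls by metis
  thus "x \<otimes>\<^bsub>G\<^esub> y \<otimes>\<^bsub>G\<^esub> z = x \<otimes>\<^bsub>G\<^esub> (y \<otimes>\<^bsub>G\<^esub> z)" by (simp add: mult_cls)
next
  fix x assume "x \<in> carrier G"
  then obtain u where "u \<in> words X" "x = cls u" using carrier_cls by blast
  thus "\<one>\<^bsub>G\<^esub> \<otimes>\<^bsub>G\<^esub> x = x" by (simp add: mult_cls one_G)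
next
  fix x assume "x \<in> carrier G"
  then obtain u where u: "u \<in> words X" "x = cls u" using carrier_cls by blast
  have "cls (inv_word u) \<otimes>\<^bsub>G\<^esub> x = \<one>\<^bsub>G\<^esub>"
    using u by (simp add: mult_cls one_G cls_eq raag_rel_cancel2)
  thus "\<exists>y\<in>carrier G. y \<otimes>\<^bsub>G\<^esub> x = \<one>\<^bsub>G\<^esub>" using u by (metis cls_carrier inv_word_words)
qed

end

sublocale raag \<subseteq> A: group "RAAG X E" by (rule group_G)

context raag begin

lemma cls_inv_word: "w \<in> words X \<Longrightarrow> cls (inv_word w) = inv\<^bsub>G\<^esub> (cls w)"
  by (rule A.inv_equality[symmetric]) (simp_all add: mult_cls one_G cls_eq raag_rel_cancel2)

definition gen :: "'v \<Rightarrow> 'v word set" where "gen v = cls [(v, False)]"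

definition lt :: "'v letter \<Rightarrow> 'v word set" where
  "lt a = (if snd a then inv\<^bsub>G\<^esub> (gen (fst a)) else gen (fst a))"

lemma gen_carrier[simp]: "v \<in> X \<Longrightarrow> gen v \<in> carrier G" by (simp add: gen_def)
lemma lt_carrier[simp]: "fst a \<in> X \<Longrightarrow> lt a \<in> carrier G" by (simp add: lt_def)

lemma cls_single: "fst a \<in> X \<Longrightarrow> cls [a] = lt a"
proof (cases a)
  case (Pair v b)
  assume "fst a \<in> X"
  show ?thesis
  proof (cases b)
    case True
    have "cls [(v, True)] = cls (inv_word [(v, False)])" by (simp add: inv_letter_def)
    also have "\<dots> = inv\<^bsub>G\<^esub> (cls [(v, False)])" using Pair \<open>fst a \<in> X\<close>
      by (intro cls_inv_word) simp
    finally show ?thesis using Pair True by (simp add: lt_def gen_def)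
  qed (simp add: Pair lt_def gen_def)
qed

lemma cls_Cons: "fst a \<in> X \<Longrightarrow> w \<in> words X \<Longrightarrow> cls (a # w) = lt a \<otimes>\<^bsub>G\<^esub> cls w"
  using mult_cls[of "[a]" w] by (simp add: cls_single)

lemma lt_inv_letter: "fst a \<in> X \<Longrightarrow> lt (inv_letter a) = inv\<^bsub>G\<^esub> (lt a)"
  by (simp add: lt_def)

lemma swap_gen: "E v w \<Longrightarrow> gen v \<otimes>\<^bsub>G\<^esub> gen w = gen w \<otimes>\<^bsub>G\<^esub> gen v"
proof -
  assume e: "E v w"
  hence "v \<in> X" "w \<in> X" using E_X by auto
  moreover have "raag_step E ([] @ [(v,False), (w,False)] @ []) ([] @ [(w,False), (v,False)] @ [])"
    by (rule raag_step.swap) (simp add: e)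
  ultimately show ?thesis unfolding gen_def
    by (simp add: mult_cls cls_eq raag_rel_step)
qed

end


lemma (in group) comm_inv1: "x \<in> carrier G \<Longrightarrow> y \<in> carrier G \<Longrightarrow> x \<otimes> y = y \<otimes> x \<Longrightarrow> inv x \<otimes> y = y \<otimes> inv x"
proof -
  assume a: "x \<in> carrier G" "y \<in> carrier G" "x \<otimes> y = y \<otimes> x"
  have "inv x \<otimes> y = inv x \<otimes> (y \<otimes> x) \<otimes> inv x" using a(1,2) by (simp add: m_assoc)
  also have "\<dots> = inv x \<otimes> (x \<otimes> y) \<otimes> inv x" using a by simp
  also have "\<dots> = y \<otimes> inv x" using a(1,2) by (simp add: gs)
  finally show ?thesis .
qed
lemma (in group) comm_inv2: "x \<in> carrier G \<Longrightarrow> y \<in> carrier G \<Longrightarrow> x \<otimes> y = y \<otimes> x \<Longrightarrow> x \<otimes> inv y = inv y \<otimes> x"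
  using comm_inv1[of y x] by simp

context raag begin

definition lv :: "('v \<Rightarrow> 'v word set) \<Rightarrow> 'v letter \<Rightarrow> 'v word set" where
  "lv \<phi> a = (if snd a then inv\<^bsub>G\<^esub> (\<phi> (fst a)) else \<phi> (fst a))"

primrec ev :: "('v \<Rightarrow> 'v word set) \<Rightarrow> 'v word \<Rightarrow> 'v word set" where
  "ev \<phi> [] = \<one>\<^bsub>G\<^esub>"
| "ev \<phi> (a # w) = lv \<phi> a \<otimes>\<^bsub>G\<^esub> ev \<phi> w"

definition good :: "('v \<Rightarrow> 'v word set) \<Rightarrow> bool" where
  "good \<phi> \<longleftrightarrow> (\<forall>v\<in>X. \<phi> v \<in> carrier G) \<and> (\<forall>v w. E v w \<longrightarrow> \<phi> v \<otimes>\<^bsub>G\<^esub> \<phi> w = \<phi> w \<otimes>\<^bsub>G\<^esub> \<phi> v)"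

lemma good_carrier: "good \<phi> \<Longrightarrow> v \<in> X \<Longrightarrow> \<phi> v \<in> carrier G" by (simp add: good_def)

lemma lv_carrier[simp]: "\<forall>v\<in>X. \<phi> v \<in> carrier G \<Longrightarrow> fst a \<in> X \<Longrightarrow> lv \<phi> a \<in> carrier G"
  by (simp add: lv_def)

lemma ev_carrier[simp]: "\<forall>v\<in>X. \<phi> v \<in> carrier G \<Longrightarrow> w \<in> words X \<Longrightarrow> ev \<phi> w \<in> carrier G"
  by (induct w) auto

lemma ev_append: "\<forall>v\<in>X. \<phi> v \<in> carrier G \<Longrightarrow> u \<in> words X \<Longrightarrow> w \<in> words X \<Longrightarrow>
   ev \<phi> (u @ w) = ev \<phi> u \<otimes>\<^bsub>G\<^esub> ev \<phi> w"
  by (induct u) (auto simp: A.m_assoc)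

lemma ev_cong: "\<forall>v\<in>X. \<phi> v = \<psi> v \<Longrightarrow> w \<in> words X \<Longrightarrow> ev \<phi> w = ev \<psi> w"
  by (induct w) (auto simp: lv_def)

lemma lv_inv: "\<forall>v\<in>X. \<phi> v \<in> carrier G \<Longrightarrow> fst a \<in> X \<Longrightarrow> lv \<phi> (inv_letter a) = inv\<^bsub>G\<^esub> (lv \<phi> a)"
  by (simp add: lv_def)

lemma lv_comm: assumes "good \<phi>" "E (fst a) (fst b)"
  shows "lv \<phi> a \<otimes>\<^bsub>G\<^esub> lv \<phi> b = lv \<phi> b \<otimes>\<^bsub>G\<^esub> lv \<phi> a"
proof -
  have X: "fst a \<in> X" "fst b \<in> X" using assms E_X by auto
  have c: "\<phi> (fst a) \<otimes>\<^bsub>G\<^esub> \<phi> (fst b) = \<phi> (fst b) \<otimes>\<^bsub>G\<^esub> \<phi> (fst a)" using assms unfolding good_def by blast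
  have car: "\<phi> (fst a) \<in> carrier G" "\<phi> (fst b) \<in> carrier G" using assms X by (auto simp: good_def)
  show ?thesis
  proof -
    have c1: "inv\<^bsub>G\<^esub> \<phi> (fst a) \<otimes>\<^bsub>G\<^esub> \<phi> (fst b) = \<phi> (fst b) \<otimes>\<^bsub>G\<^esub> inv\<^bsub>G\<^esub> \<phi> (fst a)"
      using A.comm_inv1[OF car c] .
    have c2: "\<phi> (fst a) \<otimes>\<^bsub>G\<^esub> inv\<^bsub>G\<^esub> \<phi> (fst b) = inv\<^bsub>G\<^esub> \<phi> (fst b) \<otimes>\<^bsub>G\<^esub> \<phi> (fst a)"
      using A.comm_inv2[OF car c] .
    have c3: "inv\<^bsub>G\<^esub> \<phi> (fst a) \<otimes>\<^bsub>G\<^esub> inv\<^bsub>G\<^esub> \<phi> (fst b) = inv\<^bsub>G\<^esub> \<phi> (fst b) \<otimes>\<^bsub>G\<^esub> inv\<^bsub>G\<^esub> \<phi> (fst a)"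
      using A.comm_inv2[OF A.inv_closed[OF car(1)] car(2) c1] .
    show ?thesis unfolding lv_def using c c1 c2 c3 by (cases "snd a"; cases "snd b") simp_all
  qed
qed

lemma ev_step: assumes "good \<phi>" "raag_step E u w" "u \<in> words X" "w \<in> words X"
  shows "ev \<phi> u = ev \<phi> w"
  using assms(2,3,4)
proof (induction rule: raag_step.induct)
  case (cancel u a w)
  have c: "\<forall>v\<in>X. \<phi> v \<in> carrier G" using assms(1) good_def by auto
  have "fst a \<in> X" "u \<in> words X" "w \<in> words X" using cancel by auto
  thus ?case using c by (simp add: ev_append lv_inv A.cancel_l1)
next
  case (swap a b u w)
  have c: "\<forall>v\<in>X. \<phi> v \<in> carrier G" using assms(1) good_def by auto
  have x: "fst a \<in> X" "fst b \<in> X" "u \<in> words X" "w \<in> words X" using swap by auto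
  have "lv \<phi> a \<otimes>\<^bsub>G\<^esub> (lv \<phi> b \<otimes>\<^bsub>G\<^esub> ev \<phi> w) = lv \<phi> b \<otimes>\<^bsub>G\<^esub> (lv \<phi> a \<otimes>\<^bsub>G\<^esub> ev \<phi> w)"
    using lv_comm[OF assms(1) swap(1)] x c by (simp add: A.m_assoc[symmetric])
  thus ?case using x c by (simp add: ev_append)
qed

lemma ev_rel: assumes "good \<phi>" "(u, w) \<in> R" shows "ev \<phi> u = ev \<phi> w"
proof -
  have "(u, w) \<in> (base_rel X E)\<^sup>*" using assms(2) by (simp add: raag_rel_base)
  thus ?thesis
  proof (induction rule: rtrancl_induct)
    case (step y z)
    have "y \<in> words X" "z \<in> words X" "raag_step E y z \<or> raag_step E z y" using step(2) by (auto simp: base_rel_def)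
    hence "ev \<phi> y = ev \<phi> z" using ev_step[OF assms(1)] by metis
    thus ?case using step(3) by simp
  qed simp
qed

lemma cls_ev: "w \<in> words X \<Longrightarrow> cls w = ev gen w"
  by (induct w) (auto simp: one_G cls_Cons lv_def lt_def)

lemma hom_ev: assumes "h \<in> hom G G" "\<forall>v\<in>X. \<phi> v \<in> carrier G" "w \<in> words X"
  shows "h (ev \<phi> w) = ev (\<lambda>v. h (\<phi> v)) w"
proof -
  interpret gh: group_hom G G h using assms(1) by (simp add: group_hom_def group_hom_axioms_def A.group_axioms)
  show ?thesis using assms(3) assms(2) by (induct w) (auto simp: lv_def)
qed

lemma subst_ev: assumes "\<forall>v\<in>X. f v \<in> words X" "w \<in> words X"
  shows "subst_word f w \<in> words X \<and> cls (subst_word f w) = ev (\<lambda>v. cls (f v)) w"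
  using assms(2)
proof (induction w)
  case Nil thus ?case by (simp add: one_G)
next
  case (Cons a w)
  have fa: "f (fst a) \<in> words X" using assms(1) Cons.prems by simp
  thus ?case using Cons by (auto simp: mult_cls[symmetric] cls_inv_word lv_def)
qed

lemma induced_cls: assumes "\<forall>v\<in>X. f v \<in> words X" "good (\<lambda>v. cls (f v))" "w \<in> words X"
  shows "induced X E f (cls w) = ev (\<lambda>v. cls (f v)) w"
proof -
  have "\<And>w'. w' \<in> cls w \<Longrightarrow> R `` {subst_word f w'} = ev (\<lambda>v. cls (f v)) w"
  proof -
    fix w' assume "w' \<in> cls w"
    hence r: "(w, w') \<in> R" by (simp add: mem_cls)
    hence "w' \<in> words X" using raag_rel_words by blast
    hence "R `` {subst_word f w'} = ev (\<lambda>v. cls (f v)) w'" using subst_ev[OF assms(1)] cls_def by auto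
    also have "\<dots> = ev (\<lambda>v. cls (f v)) w" using ev_rel[OF assms(2) r] by simp
    finally show "R `` {subst_word f w'} = ev (\<lambda>v. cls (f v)) w" .
  qed
  moreover have "w \<in> cls w" using assms(3) by (simp add: mem_cls raag_rel_refl)
  ultimately show ?thesis using assms(3) unfolding induced_def by auto
qed

definition rep :: "('v \<Rightarrow> 'v word set) \<Rightarrow> 'v \<Rightarrow> 'v word" where
  "rep \<phi> v = (SOME w. w \<in> words X \<and> cls w = \<phi> v)"

definition hext :: "('v \<Rightarrow> 'v word set) \<Rightarrow> 'v word set \<Rightarrow> 'v word set" where
  "hext \<phi> = induced X E (rep \<phi>)"

lemma rep: "\<phi> v \<in> carrier G \<Longrightarrow> rep \<phi> v \<in> words X \<and> cls (rep \<phi> v) = \<phi> v"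
  unfolding rep_def by (rule someI_ex) (metis carrier_cls)

lemma good_rep: "good \<phi> \<Longrightarrow> good (\<lambda>v. cls (rep \<phi> v))"
  unfolding good_def
proof (intro conjI ballI allI impI)
  assume g: "(\<forall>v\<in>X. \<phi> v \<in> carrier G) \<and> (\<forall>v w. E v w \<longrightarrow> \<phi> v \<otimes>\<^bsub>G\<^esub> \<phi> w = \<phi> w \<otimes>\<^bsub>G\<^esub> \<phi> v)"
  fix v assume "v \<in> X" thus "cls (rep \<phi> v) \<in> carrier G" using rep[of \<phi> v] g by simp
next
  assume g: "(\<forall>v\<in>X. \<phi> v \<in> carrier G) \<and> (\<forall>v w. E v w \<longrightarrow> \<phi> v \<otimes>\<^bsub>G\<^esub> \<phi> w = \<phi> w \<otimes>\<^bsub>G\<^esub> \<phi> v)"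
  fix v w assume e: "E v w"
  hence "v \<in> X" "w \<in> X" using E_X by auto
  thus "cls (rep \<phi> v) \<otimes>\<^bsub>G\<^esub> cls (rep \<phi> w) = cls (rep \<phi> w) \<otimes>\<^bsub>G\<^esub> cls (rep \<phi> v)"
  proof -
    have "cls (rep \<phi> v) = \<phi> v" "cls (rep \<phi> w) = \<phi> w" using rep[of \<phi> v] rep[of \<phi> w] g \<open>v \<in> X\<close> \<open>w \<in> X\<close> by simp_all
    moreover have "\<phi> v \<otimes>\<^bsub>G\<^esub> \<phi> w = \<phi> w \<otimes>\<^bsub>G\<^esub> \<phi> v" using g e by blast
    ultimately show ?thesis by simp
  qed
qed

lemma hext_cls: assumes "good \<phi>" "w \<in> words X" shows "hext \<phi> (cls w) = ev \<phi> w"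
proof -
  have "\<forall>v\<in>X. rep \<phi> v \<in> words X" using rep good_carrier[OF assms(1)] by blast
  hence "hext \<phi> (cls w) = ev (\<lambda>v. cls (rep \<phi> v)) w"
    unfolding hext_def by (rule induced_cls[OF _ good_rep[OF assms(1)] assms(2)])
  also have "\<dots> = ev \<phi> w" by (rule ev_cong[OF _ assms(2)]) (simp add: rep good_carrier[OF assms(1)])
  finally show ?thesis .
qed

lemma hext_ext: "hext \<phi> \<in> extensional (carrier G)"
  by (simp add: hext_def induced_def)

lemma hext_carrier: assumes "good \<phi>" "x \<in> carrier G" shows "hext \<phi> x \<in> carrier G"
  using assms carrier_cls[OF assms(2)] hext_cls ev_carrier good_def by force

lemma hext_hom: assumes "good \<phi>" shows "hext \<phi> \<in> hom G G"
proof (rule homI)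
  fix x assume "x \<in> carrier G" thus "hext \<phi> x \<in> carrier G" using hext_carrier assms by blast
next
  fix x y assume "x \<in> carrier G" "y \<in> carrier G"
  then obtain u w where "u \<in> words X" "w \<in> words X" "x = cls u" "y = cls w" using carrier_cls by metis
  thus "hext \<phi> (x \<otimes>\<^bsub>G\<^esub> y) = hext \<phi> x \<otimes>\<^bsub>G\<^esub> hext \<phi> y"
    using assms good_carrier[OF assms] by (simp add: mult_cls hext_cls ev_append)
qed

lemma hext_gen: "good \<phi> \<Longrightarrow> v \<in> X \<Longrightarrow> hext \<phi> (gen v) = \<phi> v"
  by (simp add: gen_def hext_cls lv_def good_carrier)

lemma hom_eq: assumes "h1 \<in> hom G G" "h2 \<in> hom G G" "\<forall>v\<in>X. h1 (gen v) = h2 (gen v)" "x \<in> carrier G"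
  shows "h1 x = h2 x"
proof -
  obtain w where w: "w \<in> words X" "x = cls w" using carrier_cls assms(4) by blast
  have "h1 x = ev (\<lambda>v. h1 (gen v)) w" using hom_ev[OF assms(1)] w by (simp add: cls_ev)
  also have "\<dots> = ev (\<lambda>v. h2 (gen v)) w" using assms(3) w by (intro ev_cong) auto
  also have "\<dots> = h2 x" using hom_ev[OF assms(2)] w by (simp add: cls_ev)
  finally show ?thesis .
qed

lemma induced_hext: assumes "\<forall>v\<in>X. f v \<in> words X" "good (\<lambda>v. cls (f v))"
  shows "induced X E f = hext (\<lambda>v. cls (f v))"
proof (rule extensionalityI[of _ "carrier G"])
  show "induced X E f \<in> extensional (carrier G)" by (simp add: induced_def)
  show "hext (\<lambda>v. cls (f v)) \<in> extensional (carrier G)" by (rule hext_ext)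
  fix x assume "x \<in> carrier G"
  then obtain w where "w \<in> words X" "x = cls w" using carrier_cls by blast
  thus "induced X E f x = hext (\<lambda>v. cls (f v)) x" using induced_cls hext_cls assms by simp
qed

end


lemma (in group) comm_mult: "a \<in> carrier G \<Longrightarrow> b \<in> carrier G \<Longrightarrow> x \<in> carrier G \<Longrightarrow>
  a \<otimes> x = x \<otimes> a \<Longrightarrow> b \<otimes> x = x \<otimes> b \<Longrightarrow> (a \<otimes> b) \<otimes> x = x \<otimes> (a \<otimes> b)"
proof -
  assume a: "a \<in> carrier G" "b \<in> carrier G" "x \<in> carrier G" "a \<otimes> x = x \<otimes> a" "b \<otimes> x = x \<otimes> b"
  have "(a \<otimes> b) \<otimes> x = a \<otimes> (b \<otimes> x)" using a by (simp add: m_assoc)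
  also have "\<dots> = (a \<otimes> x) \<otimes> b" using a(1-3,5) by (simp add: m_assoc)
  also have "\<dots> = (x \<otimes> a) \<otimes> b" using a(4) by simp
  also have "\<dots> = x \<otimes> (a \<otimes> b)" using a(1-3) by (simp add: m_assoc)
  finally show ?thesis .
qed

context raag begin

abbreviation "Au \<equiv> Aut X E"

lemma group_Aut: "group Au" unfolding Aut_def by (rule A.AutoGroup)
end
sublocale raag \<subseteq> B: group "Aut X E" by (rule group_Aut)
context raag begin

lemma carrier_Aut: "carrier Au = auto G" by (simp add: Aut_def AutoGroup_def BijGroup_def)

lemma Aut_hom: "f \<in> carrier Au \<Longrightarrow> f \<in> hom G G" by (simp add: carrier_Aut auto_def)
lemma Aut_Bij: "f \<in> carrier Au \<Longrightarrow> f \<in> Bij (carrier G)" by (simp add: carrier_Aut auto_def)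

lemma Aut_mem_carrier: "f \<in> carrier Au \<Longrightarrow> x \<in> carrier G \<Longrightarrow> f x \<in> carrier G"
  by (rule hom_in_carrier[OF Aut_hom])

lemma mult_Aut: assumes "f \<in> carrier Au" "g \<in> carrier Au" shows "f \<otimes>\<^bsub>Au\<^esub> g = compose (carrier G) f g"
proof -
  have "f \<in> Bij (carrier G)" "g \<in> Bij (carrier G)" using Aut_Bij assms by auto
  thus ?thesis unfolding Aut_def AutoGroup_def BijGroup_def by simp
qed

lemma app_mult: "f \<in> carrier Au \<Longrightarrow> g \<in> carrier Au \<Longrightarrow> x \<in> carrier G \<Longrightarrow> (f \<otimes>\<^bsub>Au\<^esub> g) x = f (g x)"
  by (simp add: mult_Aut compose_def)

lemma one_Aut: "\<one>\<^bsub>Au\<^esub> = (\<lambda>x\<in>carrier G. x)" by (simp add: Aut_def AutoGroup_def BijGroup_def)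

lemma Aut_eq: assumes "f \<in> carrier Au" "g \<in> carrier Au" "\<forall>v\<in>X. f (gen v) = g (gen v)"
  shows "f = g"
proof (rule extensionalityI[of _ "carrier G"])
  show "f \<in> extensional (carrier G)" "g \<in> extensional (carrier G)"
    using assms Aut_Bij Bij_imp_extensional by blast+
  fix x assume "x \<in> carrier G" thus "f x = g x" using hom_eq Aut_hom assms by blast
qed

lemma id_hom: "(\<lambda>x\<in>carrier G. x) \<in> hom G G" by (simp add: hom_def)

lemma hext_Aut: assumes "good \<phi>" "good \<psi>" "\<forall>v\<in>X. hext \<psi> (\<phi> v) = gen v" "\<forall>v\<in>X. hext \<phi> (\<psi> v) = gen v"
  shows "hext \<phi> \<in> carrier Au" "inv\<^bsub>Au\<^esub> (hext \<phi>) = hext \<psi>"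
proof -
  have h1: "hext \<phi> \<in> hom G G" "hext \<psi> \<in> hom G G" using hext_hom assms by auto
  have c1: "\<forall>x\<in>carrier G. hext \<psi> (hext \<phi> x) = x"
  proof
    fix x assume x: "x \<in> carrier G"
    have "(\<lambda>x. hext \<psi> (hext \<phi> x)) x = (\<lambda>x\<in>carrier G. x) x"
      by (rule hom_eq[OF hom_compose[OF h1(1) h1(2), unfolded comp_def] id_hom _ x])
         (simp add: hext_gen assms)
    thus "hext \<psi> (hext \<phi> x) = x" using x by simp
  qed
  have c2: "\<forall>x\<in>carrier G. hext \<phi> (hext \<psi> x) = x"
  proof
    fix x assume x: "x \<in> carrier G"
    have "(\<lambda>x. hext \<phi> (hext \<psi> x)) x = (\<lambda>x\<in>carrier G. x) x"
      by (rule hom_eq[OF hom_compose[OF h1(2) h1(1), unfolded comp_def] id_hom _ x])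
         (simp add: hext_gen assms)
    thus "hext \<phi> (hext \<psi> x) = x" using x by simp
  qed
  have "bij_betw (hext \<phi>) (carrier G) (carrier G)"
    by (rule bij_betw_byWitness[OF c1 c2]) (auto simp: hext_carrier assms)
  moreover have "bij_betw (hext \<psi>) (carrier G) (carrier G)"
    by (rule bij_betw_byWitness[OF c2 c1]) (auto simp: hext_carrier assms)
  ultimately have a: "hext \<phi> \<in> carrier Au" "hext \<psi> \<in> carrier Au"
    using h1 hext_ext by (auto simp: carrier_Aut auto_def Bij_def)
  thus "hext \<phi> \<in> carrier Au" by simp
  have "hext \<psi> \<otimes>\<^bsub>Au\<^esub> hext \<phi> = \<one>\<^bsub>Au\<^esub>"
    by (rule extensionalityI[of _ "carrier G"]) (auto simp: mult_Aut a one_Aut compose_def c1)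
  thus "inv\<^bsub>Au\<^esub> (hext \<phi>) = hext \<psi>" using group.inv_equality[OF group_Aut] a by blast
qed

definition Mf :: "'v \<Rightarrow> 'v word set \<Rightarrow> 'v word set \<Rightarrow> 'v \<Rightarrow> 'v word set" where
  "Mf c p q v = (if v = c then p \<otimes>\<^bsub>G\<^esub> gen c \<otimes>\<^bsub>G\<^esub> q else gen v)"

definition MM :: "'v \<Rightarrow> 'v word set \<Rightarrow> 'v word set \<Rightarrow> 'v word set \<Rightarrow> 'v word set" where
  "MM c p q = hext (Mf c p q)"

definition D :: "'v \<Rightarrow> 'v set" where "D c = {d \<in> Z. dominates X E d c \<and> d \<noteq> c}"

definition SS :: "'v set \<Rightarrow> 'v word set set" where "SS A = generate G (gen ` A)"

abbreviation "W c \<equiv> SS (D c)"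

lemma D_X: "D c \<subseteq> X" using Z_X by (auto simp: D_def)
lemma c_notin_D[simp]: "c \<notin> D c" by (simp add: D_def)

lemma SS_carrier: "A \<subseteq> X \<Longrightarrow> SS A \<subseteq> carrier G"
  unfolding SS_def by (rule A.generate_incl) auto

lemma SS_subgroup: "A \<subseteq> X \<Longrightarrow> subgroup (SS A) G"
  unfolding SS_def by (rule A.generate_is_subgroup) auto

lemma SS_carrier'[simp]: "A \<subseteq> X \<Longrightarrow> g \<in> SS A \<Longrightarrow> g \<in> carrier G" using SS_carrier by (rule subsetD)
lemma W_carrier[simp]: "g \<in> W c \<Longrightarrow> g \<in> carrier G" by (rule SS_carrier'[OF D_X])

lemma gen_SS: "v \<in> A \<Longrightarrow> gen v \<in> SS A" by (simp add: SS_def generate.incl)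

lemma SS_mono: "A \<subseteq> B \<Longrightarrow> SS A \<subseteq> SS B" unfolding SS_def by (intro A.mono_generate) auto

lemma SS_mult[simp]: "A \<subseteq> X \<Longrightarrow> g \<in> SS A \<Longrightarrow> h \<in> SS A \<Longrightarrow> g \<otimes>\<^bsub>G\<^esub> h \<in> SS A"
  by (rule subgroup.m_closed[OF SS_subgroup])
lemma SS_inv[simp]: "A \<subseteq> X \<Longrightarrow> g \<in> SS A \<Longrightarrow> inv\<^bsub>G\<^esub> g \<in> SS A"
  by (rule subgroup.m_inv_closed[OF SS_subgroup])
lemma SS_one[simp]: "\<one>\<^bsub>G\<^esub> \<in> SS A" by (simp add: SS_def generate.one)

lemma W_mult[simp]: "g \<in> W c \<Longrightarrow> h \<in> W c \<Longrightarrow> g \<otimes>\<^bsub>G\<^esub> h \<in> W c" using D_X by simp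
lemma W_inv[simp]: "g \<in> W c \<Longrightarrow> inv\<^bsub>G\<^esub> g \<in> W c" using D_X by simp

lemma hom_fix_SS: assumes "h \<in> hom G G" "A \<subseteq> X" "\<forall>v\<in>A. h (gen v) = gen v" "g \<in> SS A"
  shows "h g = g"
proof -
  interpret gh: group_hom G G h using assms(1) by (simp add: group_hom_def group_hom_axioms_def A.group_axioms)
  show ?thesis using assms(4) unfolding SS_def
  proof (induction rule: generate.induct)
    case (inv x) thus ?case using assms(2,3) by auto
  next
    case (eng x y)
    have "gen ` A \<subseteq> carrier G" using assms(2) by auto
    hence "x \<in> carrier G" "y \<in> carrier G" using eng(1,2) A.generate_in_carrier by auto
    thus ?case using eng by simp
  qed (use assms in auto)
qed

lemma hom_into_SS: assumes "h \<in> hom G G" "A \<subseteq> X" "subgroup S G" "\<forall>v\<in>A. h (gen v) \<in> S" "g \<in> SS A"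
  shows "h g \<in> S"
proof -
  interpret gh: group_hom G G h using assms(1) by (simp add: group_hom_def group_hom_axioms_def A.group_axioms)
  show ?thesis using assms(5) unfolding SS_def
  proof (induction rule: generate.induct)
    case one thus ?case using assms(3) subgroup.one_closed by force
  next
    case (inv x)
    then obtain v where "v \<in> A" "x = gen v" by auto
    thus ?case using assms(2,4) subgroup.m_inv_closed[OF assms(3)] by auto
  next
    case (eng x y)
    have "gen ` A \<subseteq> carrier G" using assms(2) by auto
    hence "x \<in> carrier G" "y \<in> carrier G" using eng(1,2) A.generate_in_carrier by auto
    thus ?case using eng subgroup.m_closed[OF assms(3)] by simp
  qed (use assms in auto)
qed

lemma comm_SS: assumes "x \<in> carrier G" "A \<subseteq> X" "\<forall>v\<in>A. x \<otimes>\<^bsub>G\<^esub> gen v = gen v \<otimes>\<^bsub>G\<^esub> x" "g \<in> SS A"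
  shows "x \<otimes>\<^bsub>G\<^esub> g = g \<otimes>\<^bsub>G\<^esub> x"
  using assms(4) unfolding SS_def
proof (induction rule: generate.induct)
  case (inv h)
  then obtain v where "v \<in> A" "h = gen v" by auto
  thus ?case using assms A.comm_inv2[of x "gen v"] by auto
next
  case (eng g h)
  have "gen ` A \<subseteq> carrier G" using assms(2) by auto
  hence "g \<in> carrier G" "h \<in> carrier G" using eng(1,2) A.generate_in_carrier by auto
  thus ?case using eng assms(1) A.comm_mult[of g h x] by simp
qed (use assms in auto)

lemma dom_trans: assumes "dominates X E u v" "dominates X E v w" shows "dominates X E u w"
  unfolding dominates_def
proof
  fix x assume x: "x \<in> lk X E w"
  hence "x \<in> st X E v" using assms(2) by (auto simp: dominates_def)
  hence "x = v \<or> x \<in> lk X E v" by (simp add: st_def)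
  thus "x \<in> st X E u"
  proof
    assume "x \<in> lk X E v" thus ?thesis using assms(1) by (auto simp: dominates_def)
  next
    assume xv: "x = v"
    hence "E w v" using x by (simp add: lk_def)
    hence "w \<in> lk X E v" using E_sym E_X by (simp add: lk_def)
    hence "w \<in> st X E u" using assms(1) by (auto simp: dominates_def)
    hence "w = u \<or> E u w" by (auto simp: st_def lk_def)
    thus ?thesis
    proof
      assume "w = u" thus ?thesis using x by (simp add: st_def)
    next
      assume "E u w"
      hence "u \<in> lk X E w" using E_sym E_X by (simp add: lk_def)
      hence "u \<in> st X E v" using assms(2) by (auto simp: dominates_def)
      thus ?thesis using xv E_X E_sym by (auto simp: st_def lk_def)
    qed
  qed
qed

lemma lk_comm: assumes "E c w" "g \<in> W c" shows "gen w \<otimes>\<^bsub>G\<^esub> g = g \<otimes>\<^bsub>G\<^esub> gen w"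
proof (rule comm_SS[OF _ D_X _ assms(2)])
  show "gen w \<in> carrier G" using assms E_X by simp
  show "\<forall>v\<in>D c. gen w \<otimes>\<^bsub>G\<^esub> gen v = gen v \<otimes>\<^bsub>G\<^esub> gen w"
  proof
    fix d assume d: "d \<in> D c"
    have "w \<in> lk X E c" using assms(1) E_X by (simp add: lk_def)
    hence "w \<in> st X E d" using d by (auto simp: D_def dominates_def)
    hence "w = d \<or> E d w" by (auto simp: st_def lk_def)
    thus "gen w \<otimes>\<^bsub>G\<^esub> gen d = gen d \<otimes>\<^bsub>G\<^esub> gen w" using swap_gen E_sym by auto
  qed
qed

lemma good_M: assumes "c \<in> X" "p \<in> W c" "q \<in> W c" shows "good (Mf c p q)"
  unfolding good_def
proof (intro conjI ballI allI impI)
  fix v assume "v \<in> X" thus "Mf c p q v \<in> carrier G" using assms by (simp add: Mf_def)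
next
  fix v w assume e: "E v w"
  have vw: "v \<in> X" "w \<in> X" using e E_X by auto
  have key: "\<And>w. E c w \<Longrightarrow> (p \<otimes>\<^bsub>G\<^esub> gen c \<otimes>\<^bsub>G\<^esub> q) \<otimes>\<^bsub>G\<^esub> gen w = gen w \<otimes>\<^bsub>G\<^esub> (p \<otimes>\<^bsub>G\<^esub> gen c \<otimes>\<^bsub>G\<^esub> q)"
  proof -
    fix w assume e: "E c w"
    have w: "w \<in> X" using e E_X by auto
    have 1: "p \<otimes>\<^bsub>G\<^esub> gen w = gen w \<otimes>\<^bsub>G\<^esub> p" "q \<otimes>\<^bsub>G\<^esub> gen w = gen w \<otimes>\<^bsub>G\<^esub> q"
      using lk_comm[OF e assms(2)] lk_comm[OF e assms(3)] by auto
    have 2: "gen c \<otimes>\<^bsub>G\<^esub> gen w = gen w \<otimes>\<^bsub>G\<^esub> gen c" using swap_gen[OF e] .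
    show "?thesis w" using 1 2 A.comm_mult assms w by simp
  qed
  show "Mf c p q v \<otimes>\<^bsub>G\<^esub> Mf c p q w = Mf c p q w \<otimes>\<^bsub>G\<^esub> Mf c p q v"
  proof (cases "v = c")
    case True
    show ?thesis
    proof (cases "w = c")
      case False thus ?thesis using True key e by (simp add: Mf_def)
    qed (simp add: True)
  next
    case False
    show ?thesis
    proof (cases "w = c")
      case True thus ?thesis using False key[of v] e E_sym by (simp add: Mf_def)
    next
      case False2: False
      thus ?thesis using False swap_gen[OF e] by (simp add: Mf_def)
    qed
  qed
qed

lemma M_gen: "c \<in> X \<Longrightarrow> p \<in> W c \<Longrightarrow> q \<in> W c \<Longrightarrow> v \<in> X \<Longrightarrow>
   MM c p q (gen v) = (if v = c then p \<otimes>\<^bsub>G\<^esub> gen c \<otimes>\<^bsub>G\<^esub> q else gen v)"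
  by (simp add: MM_def hext_gen good_M Mf_def)

lemma M_hom: "c \<in> X \<Longrightarrow> p \<in> W c \<Longrightarrow> q \<in> W c \<Longrightarrow> MM c p q \<in> hom G G"
  by (simp add: MM_def hext_hom good_M)

lemma M_fix: assumes "c \<in> X" "p \<in> W c" "q \<in> W c" "A \<subseteq> X" "c \<notin> A" "g \<in> SS A"
  shows "MM c p q g = g"
proof (rule hom_fix_SS[OF M_hom[OF assms(1-3)] assms(4) _ assms(6)], rule ballI)
  fix v assume "v \<in> A"
  hence "v \<in> X" "v \<noteq> c" using assms by auto
  thus "MM c p q (gen v) = gen v" using M_gen assms by simp
qed

lemma M_fixW: "c \<in> X \<Longrightarrow> p \<in> W c \<Longrightarrow> q \<in> W c \<Longrightarrow> g \<in> W c \<Longrightarrow> MM c p q g = g"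
  using M_fix[of c p q "D c" g] D_X by simp

lemma M_Aut: assumes "c \<in> X" "p \<in> W c" "q \<in> W c"
  shows "MM c p q \<in> carrier Au" "inv\<^bsub>Au\<^esub> (MM c p q) = MM c (inv\<^bsub>G\<^esub> p) (inv\<^bsub>G\<^esub> q)"
proof -
  have g: "good (Mf c p q)" "good (Mf c (inv\<^bsub>G\<^esub> p) (inv\<^bsub>G\<^esub> q))" using good_M assms by auto
  have 1: "\<forall>v\<in>X. hext (Mf c (inv\<^bsub>G\<^esub> p) (inv\<^bsub>G\<^esub> q)) (Mf c p q v) = gen v"
  proof
    fix v assume v: "v \<in> X"
    have h: "hext (Mf c (inv\<^bsub>G\<^esub> p) (inv\<^bsub>G\<^esub> q)) \<in> hom G G" using hext_hom g by auto
    have fp: "MM c (inv\<^bsub>G\<^esub> p) (inv\<^bsub>G\<^esub> q) p = p" "MM c (inv\<^bsub>G\<^esub> p) (inv\<^bsub>G\<^esub> q) q = q"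
      using M_fixW assms by auto
    show "hext (Mf c (inv\<^bsub>G\<^esub> p) (inv\<^bsub>G\<^esub> q)) (Mf c p q v) = gen v"
      using fp v assms h by (auto simp: Mf_def MM_def hom_mult hext_gen g A.gs)
  qed
  have 2: "\<forall>v\<in>X. hext (Mf c p q) (Mf c (inv\<^bsub>G\<^esub> p) (inv\<^bsub>G\<^esub> q) v) = gen v"
  proof
    fix v assume v: "v \<in> X"
    have h: "hext (Mf c p q) \<in> hom G G" using hext_hom g by auto
    have fp: "MM c p q (inv\<^bsub>G\<^esub> p) = inv\<^bsub>G\<^esub> p" "MM c p q (inv\<^bsub>G\<^esub> q) = inv\<^bsub>G\<^esub> q"
      using M_fixW assms by auto
    show "hext (Mf c p q) (Mf c (inv\<^bsub>G\<^esub> p) (inv\<^bsub>G\<^esub> q) v) = gen v"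
      using fp v assms h by (auto simp: Mf_def MM_def hom_mult hext_gen g A.gs)
  qed
  show "MM c p q \<in> carrier Au" "inv\<^bsub>Au\<^esub> (MM c p q) = MM c (inv\<^bsub>G\<^esub> p) (inv\<^bsub>G\<^esub> q)"
    using hext_Aut[OF g 1 2] by (auto simp: MM_def)
qed

lemma M_mult: assumes "c \<in> X" "p \<in> W c" "q \<in> W c" "p' \<in> W c" "q' \<in> W c"
  shows "MM c p q \<otimes>\<^bsub>Au\<^esub> MM c p' q' = MM c (p' \<otimes>\<^bsub>G\<^esub> p) (q \<otimes>\<^bsub>G\<^esub> q')"
proof (rule Aut_eq)
  show "MM c p q \<otimes>\<^bsub>Au\<^esub> MM c p' q' \<in> carrier Au"
    using M_Aut assms by simp
  show "MM c (p' \<otimes>\<^bsub>G\<^esub> p) (q \<otimes>\<^bsub>G\<^esub> q') \<in> carrier Au" using M_Aut assms by simp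
  show "\<forall>v\<in>X. (MM c p q \<otimes>\<^bsub>Au\<^esub> MM c p' q') (gen v) = MM c (p' \<otimes>\<^bsub>G\<^esub> p) (q \<otimes>\<^bsub>G\<^esub> q') (gen v)"
  proof
    fix v assume v: "v \<in> X"
    have h: "MM c p q \<in> hom G G" using M_hom assms by auto
    show "(MM c p q \<otimes>\<^bsub>Au\<^esub> MM c p' q') (gen v) = MM c (p' \<otimes>\<^bsub>G\<^esub> p) (q \<otimes>\<^bsub>G\<^esub> q') (gen v)"
      using v assms h M_Aut M_fixW[OF assms(1-3)] by (auto simp: app_mult M_gen hom_mult A.m_assoc)
  qed
qed

lemma M_one: "c \<in> X \<Longrightarrow> MM c \<one>\<^bsub>G\<^esub> \<one>\<^bsub>G\<^esub> = \<one>\<^bsub>Au\<^esub>"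
  by (rule Aut_eq, simp add: M_Aut, rule B.one_closed) (auto simp: M_gen one_Aut)

end


context raag begin

lemma cls_Nil: "cls [] = \<one>\<^bsub>G\<^esub>" by (simp add: one_G)

lemma lt_F[simp]: "lt (v, False) = gen v" by (simp add: lt_def)
lemma lt_T[simp]: "lt (v, True) = inv\<^bsub>G\<^esub> gen v" by (simp add: lt_def)

lemma good_cong: "good \<phi> \<Longrightarrow> \<forall>v\<in>X. \<phi> v = \<psi> v \<Longrightarrow> good \<psi>"
  unfolding good_def using E_X by (metis (no_types, lifting))

lemma hext_cong: assumes "good \<phi>" "\<forall>v\<in>X. \<phi> v = \<psi> v" shows "hext \<phi> = hext \<psi>"
proof (rule extensionalityI[of _ "carrier G"])
  show "hext \<phi> \<in> extensional (carrier G)" "hext \<psi> \<in> extensional (carrier G)" by (rule hext_ext)+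
  fix x assume "x \<in> carrier G"
  then obtain w where w: "w \<in> words X" "x = cls w" using carrier_cls by blast
  have g2: "good \<psi>" by (rule good_cong[OF assms])
  show "hext \<phi> x = hext \<psi> x" using w hext_cls[OF assms(1)] hext_cls[OF g2] ev_cong[OF assms(2)] by simp
qed

lemma induced_M: assumes "\<forall>v\<in>X. f v \<in> words X" "c \<in> X" "p \<in> W c" "q \<in> W c"
  "\<forall>v\<in>X. cls (f v) = Mf c p q v"
  shows "induced X E f = MM c p q"
proof -
  have g: "good (\<lambda>v. cls (f v))" using good_cong[OF good_M[OF assms(2-4)]] assms(5) by simp
  have "induced X E f = hext (\<lambda>v. cls (f v))" by (rule induced_hext[OF assms(1) g])
  also have "\<dots> = MM c p q" unfolding MM_def by (rule hext_cong[OF g assms(5)])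
  finally show ?thesis .
qed

lemma letters_iff: "(a \<in> letters Z) = (fst a \<in> Z)" by (cases a) (simp add: letters_def)

lemma lt_W: "fst a \<in> D c \<Longrightarrow> lt a \<in> W c"
  by (simp add: lt_def gen_SS)

lemma D_iff: "(d \<in> D c) = (d \<in> Z \<and> dominates X E d c \<and> d \<noteq> c)" by (simp add: D_def)

lemma cX: "c \<in> Z \<Longrightarrow> c \<in> X" using Z_X by auto
lemma DX: "d \<in> D c \<Longrightarrow> d \<in> X" using D_X by auto

lemma words_send: assumes "fst v \<in> X" "w \<in> words X" shows "\<forall>y\<in>X. send_letter v w y \<in> words X"
  using assms by (simp add: send_letter_def)

lemma cls_gen: "cls [(v, False)] = gen v" by (simp add: gen_def)

lemma transvection_M: assumes "fst b \<in> Z" "fst a \<in> D (fst b)"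
  shows "transvection X E a b = (if snd b then MM (fst b) (inv\<^bsub>G\<^esub> (lt a)) \<one>\<^bsub>G\<^esub> else MM (fst b) \<one>\<^bsub>G\<^esub> (lt a))"
proof -
  have X: "fst b \<in> X" "fst a \<in> X" using assms cX DX by auto
  have lw: "lt a \<in> W (fst b)" using assms lt_W by auto
  have wd: "[b, a] \<in> words X" using X by simp
  show ?thesis
  proof (cases "snd b")
    case True
    have lb: "lt (inv_letter b) = gen (fst b)" using True X by (simp add: lt_def)
    have e: "cls [inv_letter a, inv_letter b] = inv\<^bsub>G\<^esub> (lt a) \<otimes>\<^bsub>G\<^esub> gen (fst b)" using X
      by (simp add: cls_Cons cls_Nil lt_inv_letter lb)
    have "induced X E (send_letter b [b, a]) = MM (fst b) (inv\<^bsub>G\<^esub> (lt a)) \<one>\<^bsub>G\<^esub>"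
    proof (rule induced_M[OF words_send[OF X(1) wd] X(1)])
      show "\<forall>v\<in>X. cls (send_letter b [b, a] v) = Mf (fst b) (inv\<^bsub>G\<^esub> lt a) \<one>\<^bsub>G\<^esub> v"
        using True e X by (simp add: send_letter_def Mf_def cls_gen)
    qed (use lw in auto)
    thus ?thesis using True by (simp add: transvection_def)
  next
    case False
    have lb: "lt b = gen (fst b)" using False X by (simp add: lt_def)
    have e: "cls [b, a] = gen (fst b) \<otimes>\<^bsub>G\<^esub> lt a" using X by (simp add: cls_Cons cls_Nil lb)
    have "induced X E (send_letter b [b, a]) = MM (fst b) \<one>\<^bsub>G\<^esub> (lt a)"
    proof (rule induced_M[OF words_send[OF X(1) wd] X(1)])
      show "\<forall>v\<in>X. cls (send_letter b [b, a] v) = Mf (fst b) \<one>\<^bsub>G\<^esub> (lt a) v"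
        using False e X by (simp add: send_letter_def Mf_def cls_gen)
    qed (use lw in auto)
    thus ?thesis using False by (simp add: transvection_def)
  qed
qed

lemma pconj_M: assumes "fst c \<in> Z" "fst x \<in> D (fst c)"
  shows "pconj X E x c = MM (fst c) (inv\<^bsub>G\<^esub> (lt x)) (lt x)"
proof -
  have X: "fst c \<in> X" "fst x \<in> X" using assms cX DX by auto
  have lw: "lt x \<in> W (fst c)" using assms lt_W by auto
  have wd: "[inv_letter x, c, x] \<in> words X" using X by simp
  have e1: "cls [inv_letter x, c, x] = inv\<^bsub>G\<^esub> (lt x) \<otimes>\<^bsub>G\<^esub> lt c \<otimes>\<^bsub>G\<^esub> lt x"
    using X by (simp add: cls_Cons cls_Nil lt_inv_letter A.gs)
  have e2: "cls [inv_letter x, inv_letter c, x] = inv\<^bsub>G\<^esub> (lt x) \<otimes>\<^bsub>G\<^esub> inv\<^bsub>G\<^esub> (lt c) \<otimes>\<^bsub>G\<^esub> lt x"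
    using X by (simp add: cls_Cons cls_Nil lt_inv_letter A.gs)
  have "induced X E (send_letter c [inv_letter x, c, x]) = MM (fst c) (inv\<^bsub>G\<^esub> (lt x)) (lt x)"
  proof (rule induced_M[OF words_send[OF X(1) wd] X(1)])
    show "\<forall>v\<in>X. cls (send_letter c [inv_letter x, c, x] v) = Mf (fst c) (inv\<^bsub>G\<^esub> lt x) (lt x) v"
      using e1 e2 X by (cases "snd c") (simp_all add: send_letter_def Mf_def cls_gen lt_def)
  qed (use lw in auto)
  thus ?thesis by (simp add: pconj_def)
qed

definition cm :: "'v word set \<Rightarrow> 'v word set \<Rightarrow> 'v word set" where
  "cm g h = inv\<^bsub>G\<^esub> g \<otimes>\<^bsub>G\<^esub> inv\<^bsub>G\<^esub> h \<otimes>\<^bsub>G\<^esub> g \<otimes>\<^bsub>G\<^esub> h"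

lemma cm_carrier[simp]: "g \<in> carrier G \<Longrightarrow> h \<in> carrier G \<Longrightarrow> cm g h \<in> carrier G" by (simp add: cm_def)
lemma cm_W[simp]: "g \<in> W c \<Longrightarrow> h \<in> W c \<Longrightarrow> cm g h \<in> W c" by (simp add: cm_def)

lemma comm_M: assumes "fst c \<in> Z" "fst x \<in> D (fst c)" "fst y \<in> D (fst c)"
  shows "comm_transvection X E x y c = (if snd c then MM (fst c) (cm (lt y) (lt x)) \<one>\<^bsub>G\<^esub>
                                        else MM (fst c) \<one>\<^bsub>G\<^esub> (cm (lt x) (lt y)))"
proof -
  have X: "fst c \<in> X" "fst x \<in> X" "fst y \<in> X" using assms cX DX by auto
  have lw: "lt x \<in> W (fst c)" "lt y \<in> W (fst c)" using assms lt_W by auto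
  have wd: "[c, inv_letter x, inv_letter y, x, y] \<in> words X" using X by simp
  show ?thesis
  proof (cases "snd c")
    case True
    have lb: "lt (inv_letter c) = gen (fst c)" using True X by (simp add: lt_def)
    have e: "cls [inv_letter y, inv_letter x, y, x, inv_letter c] = cm (lt y) (lt x) \<otimes>\<^bsub>G\<^esub> gen (fst c)"
      using X by (simp add: cls_Cons cls_Nil lt_inv_letter A.gs cm_def lb)
    have "induced X E (send_letter c [c, inv_letter x, inv_letter y, x, y]) = MM (fst c) (cm (lt y) (lt x)) \<one>\<^bsub>G\<^esub>"
    proof (rule induced_M[OF words_send[OF X(1) wd] X(1)])
      show "\<forall>v\<in>X. cls (send_letter c [c, inv_letter x, inv_letter y, x, y] v) = Mf (fst c) (cm (lt y) (lt x)) \<one>\<^bsub>G\<^esub> v"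
        using True e X by (simp add: send_letter_def Mf_def cls_gen)
    qed (use lw in auto)
    thus ?thesis using True by (simp add: comm_transvection_def)
  next
    case False
    have lb: "lt c = gen (fst c)" using False X by (simp add: lt_def)
    have e: "cls [c, inv_letter x, inv_letter y, x, y] = gen (fst c) \<otimes>\<^bsub>G\<^esub> cm (lt x) (lt y)"
      using X by (simp add: cls_Cons cls_Nil lt_inv_letter A.gs cm_def lb)
    have "induced X E (send_letter c [c, inv_letter x, inv_letter y, x, y]) = MM (fst c) \<one>\<^bsub>G\<^esub> (cm (lt x) (lt y))"
    proof (rule induced_M[OF words_send[OF X(1) wd] X(1)])
      show "\<forall>v\<in>X. cls (send_letter c [c, inv_letter x, inv_letter y, x, y] v) = Mf (fst c) \<one>\<^bsub>G\<^esub> (cm (lt x) (lt y)) v"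
        using False e X by (simp add: send_letter_def Mf_def cls_gen)
    qed (use lw in auto)
    thus ?thesis using False by (simp add: comm_transvection_def)
  qed
qed

definition inner :: "'v word set \<Rightarrow> 'v word set \<Rightarrow> 'v word set" where
  "inner g = (\<lambda>h\<in>carrier G. inv\<^bsub>G\<^esub> g \<otimes>\<^bsub>G\<^esub> h \<otimes>\<^bsub>G\<^esub> g)"

lemma inner_auts_eq: "inner_auts X E = inner ` carrier G"
  by (auto simp: inner_auts_def inner_def)

lemma inner_hom: "g \<in> carrier G \<Longrightarrow> inner g \<in> hom G G"
  by (rule homI) (auto simp: inner_def A.gs)

lemma inner_Aut: assumes "g \<in> carrier G" shows "inner g \<in> carrier Au"
proof -
  have c1: "\<forall>x\<in>carrier G. inner (inv\<^bsub>G\<^esub> g) (inner g x) = x" using assms by (auto simp: inner_def A.gs)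
  have c2: "\<forall>x\<in>carrier G. inner g (inner (inv\<^bsub>G\<^esub> g) x) = x" using assms by (auto simp: inner_def A.gs)
  have "bij_betw (inner g) (carrier G) (carrier G)"
    by (rule bij_betw_byWitness[OF c1 c2]) (auto simp: inner_def assms)
  moreover have "inner g \<in> extensional (carrier G)" by (simp add: inner_def)
  ultimately show ?thesis using inner_hom[OF assms] by (simp add: carrier_Aut auto_def Bij_def)
qed

lemma conj_inner: assumes "f \<in> carrier Au" "g \<in> carrier G"
  shows "f \<otimes>\<^bsub>Au\<^esub> inner g = inner (f g) \<otimes>\<^bsub>Au\<^esub> f"
proof -
  have fg: "f g \<in> carrier G" using Aut_mem_carrier assms by blast
  have h: "f \<in> hom G G" using Aut_hom assms by blast
  show ?thesis
  proof (rule Aut_eq)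
    show "f \<otimes>\<^bsub>Au\<^esub> inner g \<in> carrier Au" using inner_Aut assms by simp
    show "inner (f g) \<otimes>\<^bsub>Au\<^esub> f \<in> carrier Au" using inner_Aut fg assms by simp
    show "\<forall>v\<in>X. (f \<otimes>\<^bsub>Au\<^esub> inner g) (gen v) = (inner (f g) \<otimes>\<^bsub>Au\<^esub> f) (gen v)"
    proof
      fix v assume v: "v \<in> X"
      have fv: "f (gen v) \<in> carrier G" using Aut_mem_carrier assms v by simp
      have "(f \<otimes>\<^bsub>Au\<^esub> inner g) (gen v) = f (inv\<^bsub>G\<^esub> g \<otimes>\<^bsub>G\<^esub> gen v \<otimes>\<^bsub>G\<^esub> g)"
        using assms v inner_Aut by (simp add: app_mult inner_def)
      also have "\<dots> = inv\<^bsub>G\<^esub> (f g) \<otimes>\<^bsub>G\<^esub> f (gen v) \<otimes>\<^bsub>G\<^esub> f g"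
        using h assms v by (simp add: hom_mult group_hom.hom_inv[of G G f] group_hom_def group_hom_axioms_def)
      also have "\<dots> = (inner (f g) \<otimes>\<^bsub>Au\<^esub> f) (gen v)"
        using assms v inner_Aut fg fv by (simp add: app_mult inner_def)
      finally show "(f \<otimes>\<^bsub>Au\<^esub> inner g) (gen v) = (inner (f g) \<otimes>\<^bsub>Au\<^esub> f) (gen v)" .
    qed
  qed
qed

end


context raag begin

definition CC :: "'v \<Rightarrow> 'v word set set" where
  "CC c = generate G {cm g h | g h. g \<in> W c \<and> h \<in> W c}"

lemma CC_W: "CC c \<subseteq> W c"
  unfolding CC_def by (rule A.generate_subgroup_incl) (auto intro: SS_subgroup[OF D_X])

lemma CC_subgroup: "subgroup (CC c) G"
  unfolding CC_def by (rule A.generate_is_subgroup) (auto simp: cm_def)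

lemma cm_CC[simp]: "g \<in> W c \<Longrightarrow> h \<in> W c \<Longrightarrow> cm g h \<in> CC c"
  unfolding CC_def by (rule generate.incl) auto

lemma CC_mult[simp]: "x \<in> CC c \<Longrightarrow> y \<in> CC c \<Longrightarrow> x \<otimes>\<^bsub>G\<^esub> y \<in> CC c"
  by (rule subgroup.m_closed[OF CC_subgroup])
lemma CC_inv[simp]: "x \<in> CC c \<Longrightarrow> inv\<^bsub>G\<^esub> x \<in> CC c"
  by (rule subgroup.m_inv_closed[OF CC_subgroup])
lemma CC_one[simp]: "\<one>\<^bsub>G\<^esub> \<in> CC c" by (simp add: CC_def generate.one)
lemma CC_Wc[simp]: "x \<in> CC c \<Longrightarrow> x \<in> W c" using CC_W by blast

lemma M_carrier[simp]: "c \<in> X \<Longrightarrow> p \<in> W c \<Longrightarrow> q \<in> W c \<Longrightarrow> MM c p q \<in> carrier Au"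
  using M_Aut by blast

lemma GL_P: assumes K: "subgroup K Au" and c: "c \<in> X"
  and P: "\<forall>d\<in>D c. MM c (inv\<^bsub>G\<^esub> gen d) (gen d) \<in> K" and g: "g \<in> W c"
  shows "MM c (inv\<^bsub>G\<^esub> g) g \<in> K"
  using g unfolding SS_def
proof (induction rule: generate.induct)
  case one thus ?case using M_one[OF c] subgroup.one_closed[OF K] by simp
next
  case (incl h) thus ?case using P by auto
next
  case (inv h)
  then obtain d where d: "d \<in> D c" "h = gen d" by auto
  have "gen d \<in> W c" using d gen_SS by simp
  hence "MM c (inv\<^bsub>G\<^esub> (inv\<^bsub>G\<^esub> h)) (inv\<^bsub>G\<^esub> h) = inv\<^bsub>Au\<^esub> (MM c (inv\<^bsub>G\<^esub> gen d) (gen d))"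
    using d M_Aut(2)[OF c] by simp
  thus ?case using P d subgroup.m_inv_closed[OF K] by simp
next
  case (eng h1 h2)
  have w: "h1 \<in> W c" "h2 \<in> W c" using eng(1,2) unfolding SS_def by auto
  have "MM c (inv\<^bsub>G\<^esub> h1) h1 \<otimes>\<^bsub>Au\<^esub> MM c (inv\<^bsub>G\<^esub> h2) h2 = MM c (inv\<^bsub>G\<^esub> (h1 \<otimes>\<^bsub>G\<^esub> h2)) (h1 \<otimes>\<^bsub>G\<^esub> h2)"
    using M_mult[OF c] w by (simp add: A.inv_mult_group)
  thus ?case using eng subgroup.m_closed[OF K] by metis
qed

lemma cm_inv1: "x \<in> carrier G \<Longrightarrow> y \<in> carrier G \<Longrightarrow> cm (inv\<^bsub>G\<^esub> x) y = x \<otimes>\<^bsub>G\<^esub> inv\<^bsub>G\<^esub> (cm x y) \<otimes>\<^bsub>G\<^esub> inv\<^bsub>G\<^esub> x"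
  by (simp add: cm_def A.gs)
lemma cm_inv2: "x \<in> carrier G \<Longrightarrow> y \<in> carrier G \<Longrightarrow> cm x (inv\<^bsub>G\<^esub> y) = y \<otimes>\<^bsub>G\<^esub> inv\<^bsub>G\<^esub> (cm x y) \<otimes>\<^bsub>G\<^esub> inv\<^bsub>G\<^esub> y"
  by (simp add: cm_def A.gs)
lemma cm_prod2: "x \<in> carrier G \<Longrightarrow> y \<in> carrier G \<Longrightarrow> z \<in> carrier G \<Longrightarrow>
   cm x (y \<otimes>\<^bsub>G\<^esub> z) = cm x z \<otimes>\<^bsub>G\<^esub> (inv\<^bsub>G\<^esub> z \<otimes>\<^bsub>G\<^esub> cm x y \<otimes>\<^bsub>G\<^esub> inv\<^bsub>G\<^esub> (inv\<^bsub>G\<^esub> z))"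
  by (simp add: cm_def A.gs)
lemma cm_prod1: "x \<in> carrier G \<Longrightarrow> y \<in> carrier G \<Longrightarrow> z \<in> carrier G \<Longrightarrow>
   cm (x \<otimes>\<^bsub>G\<^esub> y) z = inv\<^bsub>G\<^esub> (inv\<^bsub>G\<^esub> (cm y z) \<otimes>\<^bsub>G\<^esub> (inv\<^bsub>G\<^esub> y \<otimes>\<^bsub>G\<^esub> inv\<^bsub>G\<^esub> (cm x z) \<otimes>\<^bsub>G\<^esub> inv\<^bsub>G\<^esub> (inv\<^bsub>G\<^esub> y)))"
  by (simp add: cm_def A.gs)
lemma cm_one1[simp]: "y \<in> carrier G \<Longrightarrow> cm \<one>\<^bsub>G\<^esub> y = \<one>\<^bsub>G\<^esub>" by (simp add: cm_def)
lemma cm_one2[simp]: "y \<in> carrier G \<Longrightarrow> cm y \<one>\<^bsub>G\<^esub> = \<one>\<^bsub>G\<^esub>" by (simp add: cm_def A.gs)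

lemma GL_Q: assumes K: "subgroup K Au" and c: "c \<in> X"
  and P: "\<forall>d\<in>D c. MM c (inv\<^bsub>G\<^esub> gen d) (gen d) \<in> K"
  and Q: "\<forall>d1\<in>D c. \<forall>d2\<in>D c. MM c \<one>\<^bsub>G\<^esub> (cm (gen d1) (gen d2)) \<in> K"
  and w: "w \<in> CC c"
  shows "MM c \<one>\<^bsub>G\<^esub> w \<in> K"
proof -
  define Qs where "Qs = {w \<in> W c. MM c \<one>\<^bsub>G\<^esub> w \<in> K}"
  have Qm: "\<And>x y. x \<in> Qs \<Longrightarrow> y \<in> Qs \<Longrightarrow> x \<otimes>\<^bsub>G\<^esub> y \<in> Qs"
  proof -
    fix x y assume a: "x \<in> Qs" "y \<in> Qs"
    have "MM c \<one>\<^bsub>G\<^esub> x \<otimes>\<^bsub>Au\<^esub> MM c \<one>\<^bsub>G\<^esub> y = MM c \<one>\<^bsub>G\<^esub> (x \<otimes>\<^bsub>G\<^esub> y)"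
      using a M_mult[OF c] by (simp add: Qs_def)
    moreover have "MM c \<one>\<^bsub>G\<^esub> x \<otimes>\<^bsub>Au\<^esub> MM c \<one>\<^bsub>G\<^esub> y \<in> K"
      using a subgroup.m_closed[OF K] by (simp add: Qs_def)
    ultimately show "x \<otimes>\<^bsub>G\<^esub> y \<in> Qs" using a by (simp add: Qs_def)
  qed
  have Qi: "\<And>x. x \<in> Qs \<Longrightarrow> inv\<^bsub>G\<^esub> x \<in> Qs"
  proof -
    fix x assume a: "x \<in> Qs"
    have "inv\<^bsub>Au\<^esub> (MM c \<one>\<^bsub>G\<^esub> x) = MM c \<one>\<^bsub>G\<^esub> (inv\<^bsub>G\<^esub> x)"
      using a M_Aut(2)[OF c] by (simp add: Qs_def)
    moreover have "inv\<^bsub>Au\<^esub> (MM c \<one>\<^bsub>G\<^esub> x) \<in> K"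
      using a subgroup.m_inv_closed[OF K] by (simp add: Qs_def)
    ultimately show "inv\<^bsub>G\<^esub> x \<in> Qs" using a by (simp add: Qs_def)
  qed
  have Q1: "\<one>\<^bsub>G\<^esub> \<in> Qs" using M_one[OF c] subgroup.one_closed[OF K] by (simp add: Qs_def)
  have Qc: "\<And>g x. g \<in> W c \<Longrightarrow> x \<in> Qs \<Longrightarrow> g \<otimes>\<^bsub>G\<^esub> x \<otimes>\<^bsub>G\<^esub> inv\<^bsub>G\<^esub> g \<in> Qs"
  proof -
    fix g x assume a: "g \<in> W c" "x \<in> Qs"
    have xw: "x \<in> W c" using a by (simp add: Qs_def)
    have k1: "MM c (inv\<^bsub>G\<^esub> g) g \<in> K" using GL_P[OF K c P a(1)] .
    have k2: "MM c (inv\<^bsub>G\<^esub> (inv\<^bsub>G\<^esub> g)) (inv\<^bsub>G\<^esub> g) \<in> K" using GL_P[OF K c P W_inv[OF a(1)]] a(1) by simp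
    have "MM c (inv\<^bsub>G\<^esub> g) g \<otimes>\<^bsub>Au\<^esub> MM c \<one>\<^bsub>G\<^esub> x \<otimes>\<^bsub>Au\<^esub> MM c (inv\<^bsub>G\<^esub> (inv\<^bsub>G\<^esub> g)) (inv\<^bsub>G\<^esub> g)
      = MM c \<one>\<^bsub>G\<^esub> (g \<otimes>\<^bsub>G\<^esub> x \<otimes>\<^bsub>G\<^esub> inv\<^bsub>G\<^esub> g)"
      using a xw M_mult[OF c] by (simp add: A.gs)
    moreover have "MM c (inv\<^bsub>G\<^esub> g) g \<otimes>\<^bsub>Au\<^esub> MM c \<one>\<^bsub>G\<^esub> x \<otimes>\<^bsub>Au\<^esub> MM c (inv\<^bsub>G\<^esub> (inv\<^bsub>G\<^esub> g)) (inv\<^bsub>G\<^esub> g) \<in> K"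
      using k1 k2 a subgroup.m_closed[OF K] by (simp add: Qs_def)
    ultimately show "g \<otimes>\<^bsub>G\<^esub> x \<otimes>\<^bsub>G\<^esub> inv\<^bsub>G\<^esub> g \<in> Qs" using a xw by (simp add: Qs_def)
  qed
  define Lt where "Lt = gen ` D c \<union> (\<lambda>d. inv\<^bsub>G\<^esub> gen d) ` D c"
  have LtW: "\<And>l. l \<in> Lt \<Longrightarrow> l \<in> W c" by (auto simp: Lt_def gen_SS)
  have base: "\<And>d1 d2. d1 \<in> D c \<Longrightarrow> d2 \<in> D c \<Longrightarrow> cm (gen d1) (gen d2) \<in> Qs"
    using Q by (auto simp: Qs_def gen_SS)
  have ll: "\<And>l1 l2. l1 \<in> Lt \<Longrightarrow> l2 \<in> Lt \<Longrightarrow> cm l1 l2 \<in> Qs"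
  proof -
    fix l1 l2 assume a: "l1 \<in> Lt" "l2 \<in> Lt"
    then obtain d1 d2 where d: "d1 \<in> D c" "d2 \<in> D c" "l1 = gen d1 \<or> l1 = inv\<^bsub>G\<^esub> gen d1"
      "l2 = gen d2 \<or> l2 = inv\<^bsub>G\<^esub> gen d2" by (auto simp: Lt_def)
    have gw: "gen d1 \<in> W c" "gen d2 \<in> W c" using d gen_SS by auto
    have b0: "cm (gen d1) (gen d2) \<in> Qs" using base d by auto
    have b1: "cm (inv\<^bsub>G\<^esub> gen d1) (gen d2) \<in> Qs"
      using cm_inv1[of "gen d1" "gen d2"] Qc[OF gw(1) Qi[OF b0]] gw by simp
    have b2: "cm (gen d1) (inv\<^bsub>G\<^esub> gen d2) \<in> Qs"
      using cm_inv2[of "gen d1" "gen d2"] Qc[OF gw(2) Qi[OF b0]] gw by simp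
    have b3: "cm (inv\<^bsub>G\<^esub> gen d1) (inv\<^bsub>G\<^esub> gen d2) \<in> Qs"
      using cm_inv1[of "gen d1" "inv\<^bsub>G\<^esub> gen d2"] Qc[OF gw(1) Qi[OF b2]] gw by simp
    show "cm l1 l2 \<in> Qs" using d b0 b1 b2 b3 by auto
  qed
  have lh: "\<And>l h. l \<in> Lt \<Longrightarrow> h \<in> W c \<Longrightarrow> cm l h \<in> Qs"
  proof -
    fix l h assume l: "l \<in> Lt" and h: "h \<in> W c"
    show "cm l h \<in> Qs" using h unfolding SS_def
    proof (induction rule: generate.induct)
      case one thus ?case using LtW[OF l] Q1 by simp
    next
      case (incl x) thus ?case using ll[OF l] by (auto simp: Lt_def)
    next
      case (inv x) thus ?case using ll[OF l] by (auto simp: Lt_def)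
    next
      case (eng x y)
      have xy: "x \<in> W c" "y \<in> W c" using eng(1,2) unfolding SS_def by auto
      have "cm l (x \<otimes>\<^bsub>G\<^esub> y) = cm l y \<otimes>\<^bsub>G\<^esub> (inv\<^bsub>G\<^esub> y \<otimes>\<^bsub>G\<^esub> cm l x \<otimes>\<^bsub>G\<^esub> inv\<^bsub>G\<^esub> (inv\<^bsub>G\<^esub> y))"
        using cm_prod2 xy LtW[OF l] by simp
      moreover have "cm l y \<otimes>\<^bsub>G\<^esub> (inv\<^bsub>G\<^esub> y \<otimes>\<^bsub>G\<^esub> cm l x \<otimes>\<^bsub>G\<^esub> inv\<^bsub>G\<^esub> (inv\<^bsub>G\<^esub> y)) \<in> Qs"
        using Qm[OF eng(4) Qc[OF W_inv[OF xy(2)] eng(3)]] .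
      ultimately show ?case by simp
    qed
  qed
  have gh: "\<And>g h. g \<in> W c \<Longrightarrow> h \<in> W c \<Longrightarrow> cm g h \<in> Qs"
  proof -
    fix g h assume g: "g \<in> W c" and h: "h \<in> W c"
    show "cm g h \<in> Qs" using g unfolding SS_def
    proof (induction rule: generate.induct)
      case one thus ?case using h Q1 by simp
    next
      case (incl x) thus ?case using lh h by (auto simp: Lt_def)
    next
      case (inv x) thus ?case using lh h by (auto simp: Lt_def)
    next
      case (eng x y)
      have xy: "x \<in> W c" "y \<in> W c" using eng(1,2) unfolding SS_def by auto
      have "cm (x \<otimes>\<^bsub>G\<^esub> y) h = inv\<^bsub>G\<^esub> (inv\<^bsub>G\<^esub> (cm y h) \<otimes>\<^bsub>G\<^esub> (inv\<^bsub>G\<^esub> y \<otimes>\<^bsub>G\<^esub> inv\<^bsub>G\<^esub> (cm x h) \<otimes>\<^bsub>G\<^esub> inv\<^bsub>G\<^esub> (inv\<^bsub>G\<^esub> y)))"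
        using cm_prod1 xy h by simp
      moreover have "inv\<^bsub>G\<^esub> (inv\<^bsub>G\<^esub> (cm y h) \<otimes>\<^bsub>G\<^esub> (inv\<^bsub>G\<^esub> y \<otimes>\<^bsub>G\<^esub> inv\<^bsub>G\<^esub> (cm x h) \<otimes>\<^bsub>G\<^esub> inv\<^bsub>G\<^esub> (inv\<^bsub>G\<^esub> y))) \<in> Qs"
        using Qi[OF Qm[OF Qi[OF eng(4)] Qc[OF W_inv[OF xy(2)] Qi[OF eng(3)]]]] .
      ultimately show ?case by simp
    qed
  qed
  have "w \<in> Qs" using w unfolding CC_def
  proof (induction rule: generate.induct)
    case one thus ?case by (rule Q1)
  next
    case (incl x) thus ?case using gh by auto
  next
    case (inv x) thus ?case using gh Qi by auto
  next
    case (eng x y) thus ?case using Qm by blast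
  qed
  thus ?thesis by (simp add: Qs_def)
qed

lemma GL: assumes K: "subgroup K Au" and c: "c \<in> X"
  and P: "\<forall>d\<in>D c. MM c (inv\<^bsub>G\<^esub> gen d) (gen d) \<in> K"
  and Q: "\<forall>d1\<in>D c. \<forall>d2\<in>D c. MM c \<one>\<^bsub>G\<^esub> (cm (gen d1) (gen d2)) \<in> K"
  and pq: "p \<in> W c" "q \<in> W c" "p \<otimes>\<^bsub>G\<^esub> q \<in> CC c"
  shows "MM c p q \<in> K"
proof -
  have 1: "MM c (inv\<^bsub>G\<^esub> (inv\<^bsub>G\<^esub> p)) (inv\<^bsub>G\<^esub> p) \<in> K" using GL_P[OF K c P W_inv[OF pq(1)]] pq by simp
  have 2: "MM c \<one>\<^bsub>G\<^esub> (p \<otimes>\<^bsub>G\<^esub> q) \<in> K" using GL_Q[OF K c P Q pq(3)] .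
  have "MM c (inv\<^bsub>G\<^esub> (inv\<^bsub>G\<^esub> p)) (inv\<^bsub>G\<^esub> p) \<otimes>\<^bsub>Au\<^esub> MM c \<one>\<^bsub>G\<^esub> (p \<otimes>\<^bsub>G\<^esub> q) = MM c p q"
    using M_mult[OF c] pq by (simp add: A.gs)
  thus ?thesis using 1 2 subgroup.m_closed[OF K] by metis
qed

end


context raag begin

abbreviation "KK \<equiv> K_Z X E Z"
abbreviation "GG \<equiv> G_Z X E Z"

lemma KG_form: assumes "k \<in> K_gens X E Z"
  shows "(\<exists>g\<in>carrier G. k = inner g) \<or>
         (\<exists>c p q. c \<in> Z \<and> p \<in> W c \<and> q \<in> W c \<and> p \<otimes>\<^bsub>G\<^esub> q \<in> CC c \<and> k = MM c p q)"
proof -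
  consider (comm) x y c where "x \<in> letters Z" "y \<in> letters Z" "c \<in> letters Z"
      "dominates X E (fst x) (fst c)" "dominates X E (fst y) (fst c)"
      "fst x \<noteq> fst y" "fst x \<noteq> fst c" "fst y \<noteq> fst c" "k = comm_transvection X E x y c"
    | (pc) x c where "x \<in> letters Z" "c \<in> letters Z" "dominates X E (fst x) (fst c)" "fst x \<noteq> fst c"
      "k = pconj X E x c"
    | (inn) "k \<in> inner_auts X E"
    using assms unfolding K_gens_def by blast
  thus ?thesis
  proof cases
    case comm
    have d: "fst c \<in> Z" "fst x \<in> D (fst c)" "fst y \<in> D (fst c)" using comm by (auto simp: letters_iff D_iff)
    have w: "lt x \<in> W (fst c)" "lt y \<in> W (fst c)" using d lt_W by auto
    show ?thesis
    proof (cases "snd c")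
      case True
      hence "k = MM (fst c) (cm (lt y) (lt x)) \<one>\<^bsub>G\<^esub>" using comm_M[OF d] comm by simp
      moreover have "cm (lt y) (lt x) \<otimes>\<^bsub>G\<^esub> \<one>\<^bsub>G\<^esub> \<in> CC (fst c)" "cm (lt y) (lt x) \<in> W (fst c)" using w by simp_all
      ultimately show ?thesis using d(1) SS_one by blast
    next
      case False
      hence "k = MM (fst c) \<one>\<^bsub>G\<^esub> (cm (lt x) (lt y))" using comm_M[OF d] comm by simp
      moreover have "\<one>\<^bsub>G\<^esub> \<otimes>\<^bsub>G\<^esub> cm (lt x) (lt y) \<in> CC (fst c)" "cm (lt x) (lt y) \<in> W (fst c)" using w by simp_all
      ultimately show ?thesis using d(1) SS_one by blast
    qed
  next
    case pc
    have d: "fst c \<in> Z" "fst x \<in> D (fst c)" using pc by (auto simp: letters_iff D_iff)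
    have w: "lt x \<in> W (fst c)" using d lt_W by auto
    have "k = MM (fst c) (inv\<^bsub>G\<^esub> (lt x)) (lt x)" using pconj_M[OF d] pc by simp
    moreover have "inv\<^bsub>G\<^esub> (lt x) \<otimes>\<^bsub>G\<^esub> lt x \<in> CC (fst c)" using w by simp
    moreover have "inv\<^bsub>G\<^esub> (lt x) \<in> W (fst c)" using w by simp
    ultimately show ?thesis using d w by blast
  next
    case inn thus ?thesis by (auto simp: inner_auts_eq)
  qed
qed

lemma Kgens_carrier: "K_gens X E Z \<subseteq> carrier Au"
proof
  fix k assume "k \<in> K_gens X E Z"
  thus "k \<in> carrier Au" using KG_form[of k] inner_Aut M_carrier cX by auto
qed

lemma K_subgroup: "subgroup KK Au"
  unfolding K_Z_def by (rule B.generate_is_subgroup[OF Kgens_carrier])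

lemma K_carrier: "k \<in> KK \<Longrightarrow> k \<in> carrier Au" using subgroup.mem_carrier[OF K_subgroup] by blast

lemma Kgens_K: "k \<in> K_gens X E Z \<Longrightarrow> k \<in> KK" unfolding K_Z_def by (rule generate.incl)

lemma inner_K: "g \<in> carrier G \<Longrightarrow> inner g \<in> KK"
  by (rule Kgens_K) (auto simp: K_gens_def inner_auts_eq)

lemma K_crit: assumes "c \<in> Z" "p \<in> W c" "q \<in> W c" "p \<otimes>\<^bsub>G\<^esub> q \<in> CC c"
  shows "MM c p q \<in> KK"
proof (rule GL[OF K_subgroup cX[OF assms(1)] _ _ assms(2-4)])
  show "\<forall>d\<in>D c. MM c (inv\<^bsub>G\<^esub> gen d) (gen d) \<in> KK"
  proof
    fix d assume d: "d \<in> D c"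
    have "pconj X E (d, False) (c, False) = MM c (inv\<^bsub>G\<^esub> gen d) (gen d)"
      using pconj_M[of "(c, False)" "(d, False)"] assms d by simp
    moreover have "pconj X E (d, False) (c, False) \<in> K_gens X E Z"
    proof -
      have l: "(d, False) \<in> letters Z" "(c, False) \<in> letters Z" "dominates X E d c" "d \<noteq> c"
        using d assms by (auto simp: letters_iff D_iff)
      show ?thesis unfolding K_gens_def using l by fastforce
    qed
    ultimately show "MM c (inv\<^bsub>G\<^esub> gen d) (gen d) \<in> KK" using Kgens_K by metis
  qed
  show "\<forall>d1\<in>D c. \<forall>d2\<in>D c. MM c \<one>\<^bsub>G\<^esub> (cm (gen d1) (gen d2)) \<in> KK"
  proof (intro ballI)
    fix d1 d2 assume d: "d1 \<in> D c" "d2 \<in> D c"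
    show "MM c \<one>\<^bsub>G\<^esub> (cm (gen d1) (gen d2)) \<in> KK"
    proof (cases "d1 = d2")
      case True
      hence "cm (gen d1) (gen d2) = \<one>\<^bsub>G\<^esub>" using d DX by (simp add: cm_def A.gs)
      thus ?thesis using M_one cX assms subgroup.one_closed[OF K_subgroup] by simp
    next
      case False
      have "comm_transvection X E (d1, False) (d2, False) (c, False) = MM c \<one>\<^bsub>G\<^esub> (cm (gen d1) (gen d2))"
        using comm_M[of "(c, False)" "(d1, False)" "(d2, False)"] assms d by simp
      moreover have "comm_transvection X E (d1, False) (d2, False) (c, False) \<in> K_gens X E Z"
      proof -
        have l: "(d1, False) \<in> letters Z" "(d2, False) \<in> letters Z" "(c, False) \<in> letters Z"
          "dominates X E d1 c" "dominates X E d2 c" "d1 \<noteq> c" "d2 \<noteq> c"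
          using d assms by (auto simp: letters_iff D_iff)
        show ?thesis unfolding K_gens_def using l False by fastforce
      qed
      ultimately show ?thesis using Kgens_K by metis
    qed
  qed
qed

definition Tset :: "('v word set \<Rightarrow> 'v word set) \<Rightarrow> ('v word set \<Rightarrow> 'v word set) set" where
  "Tset f = {k \<in> carrier Au. f \<otimes>\<^bsub>Au\<^esub> k \<otimes>\<^bsub>Au\<^esub> inv\<^bsub>Au\<^esub> f \<in> KK}"

lemma Tset_subgroup: assumes f: "f \<in> carrier Au" shows "subgroup (Tset f) Au"
proof (rule B.subgroupI)
  show "Tset f \<subseteq> carrier Au" by (auto simp: Tset_def)
  show "Tset f \<noteq> {}"
  proof -
    have "f \<otimes>\<^bsub>Au\<^esub> \<one>\<^bsub>Au\<^esub> \<otimes>\<^bsub>Au\<^esub> inv\<^bsub>Au\<^esub> f = \<one>\<^bsub>Au\<^esub>" using f by simp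
    hence "\<one>\<^bsub>Au\<^esub> \<in> Tset f" using subgroup.one_closed[OF K_subgroup] by (simp add: Tset_def)
    thus ?thesis by blast
  qed
next
  fix k assume k: "k \<in> Tset f"
  have kc: "k \<in> carrier Au" using k by (simp add: Tset_def)
  have "f \<otimes>\<^bsub>Au\<^esub> inv\<^bsub>Au\<^esub> k \<otimes>\<^bsub>Au\<^esub> inv\<^bsub>Au\<^esub> f = inv\<^bsub>Au\<^esub> (f \<otimes>\<^bsub>Au\<^esub> k \<otimes>\<^bsub>Au\<^esub> inv\<^bsub>Au\<^esub> f)"
    using f kc by (simp add: B.gs)
  thus "inv\<^bsub>Au\<^esub> k \<in> Tset f" using k kc subgroup.m_inv_closed[OF K_subgroup] by (simp add: Tset_def)
next
  fix k h assume k: "k \<in> Tset f" and h: "h \<in> Tset f"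
  have kc: "k \<in> carrier Au" "h \<in> carrier Au" using k h by (auto simp: Tset_def)
  have "f \<otimes>\<^bsub>Au\<^esub> (k \<otimes>\<^bsub>Au\<^esub> h) \<otimes>\<^bsub>Au\<^esub> inv\<^bsub>Au\<^esub> f
     = (f \<otimes>\<^bsub>Au\<^esub> k \<otimes>\<^bsub>Au\<^esub> inv\<^bsub>Au\<^esub> f) \<otimes>\<^bsub>Au\<^esub> (f \<otimes>\<^bsub>Au\<^esub> h \<otimes>\<^bsub>Au\<^esub> inv\<^bsub>Au\<^esub> f)"
    using f kc by (simp add: B.gs)
  thus "k \<otimes>\<^bsub>Au\<^esub> h \<in> Tset f" using k h kc subgroup.m_closed[OF K_subgroup] by (simp add: Tset_def)
qed

lemma T_of_eq: assumes "f \<in> carrier Au" "k \<in> carrier Au" "F \<in> KK" "f \<otimes>\<^bsub>Au\<^esub> k = F \<otimes>\<^bsub>Au\<^esub> f"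
  shows "k \<in> Tset f"
proof -
  have Fc: "F \<in> carrier Au" using K_carrier assms by blast
  have "f \<otimes>\<^bsub>Au\<^esub> k \<otimes>\<^bsub>Au\<^esub> inv\<^bsub>Au\<^esub> f = F" using assms Fc by (simp add: B.gs)
  thus ?thesis using assms by (simp add: Tset_def)
qed

lemma K_in_T: assumes f: "f \<in> carrier Au"
  and PQ: "\<And>c. c \<in> Z \<Longrightarrow> (\<forall>d\<in>D c. MM c (inv\<^bsub>G\<^esub> gen d) (gen d) \<in> Tset f) \<and>
             (\<forall>d1\<in>D c. \<forall>d2\<in>D c. MM c \<one>\<^bsub>G\<^esub> (cm (gen d1) (gen d2)) \<in> Tset f)"
  shows "KK \<subseteq> Tset f"
  unfolding K_Z_def
proof (rule B.generate_subgroup_incl[OF _ Tset_subgroup[OF f]])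
  show "K_gens X E Z \<subseteq> Tset f"
  proof
    fix k assume k: "k \<in> K_gens X E Z"
    show "k \<in> Tset f"
      using KG_form[OF k]
    proof
      assume "\<exists>g\<in>carrier G. k = inner g"
      then obtain g where g: "g \<in> carrier G" "k = inner g" by blast
      have "f \<otimes>\<^bsub>Au\<^esub> inner g = inner (f g) \<otimes>\<^bsub>Au\<^esub> f" using conj_inner[OF f g(1)] .
      moreover have "inner (f g) \<in> KK" using inner_K Aut_mem_carrier f g by blast
      ultimately show ?thesis using T_of_eq[OF f inner_Aut[OF g(1)]] g by simp
    next
      assume "\<exists>c p q. c \<in> Z \<and> p \<in> W c \<and> q \<in> W c \<and> p \<otimes>\<^bsub>G\<^esub> q \<in> CC c \<and> k = MM c p q"
      then obtain c p q where c: "c \<in> Z" "p \<in> W c" "q \<in> W c" "p \<otimes>\<^bsub>G\<^esub> q \<in> CC c" "k = MM c p q" by blast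
      show ?thesis using GL[OF Tset_subgroup[OF f] cX[OF c(1)] _ _ c(2-4)] PQ[OF c(1)] c(5) by blast
    qed
  qed
qed

end


context raag begin

lemma M_app_mult: "c \<in> X \<Longrightarrow> p \<in> W c \<Longrightarrow> q \<in> W c \<Longrightarrow> x \<in> carrier G \<Longrightarrow> y \<in> carrier G \<Longrightarrow>
  MM c p q (x \<otimes>\<^bsub>G\<^esub> y) = MM c p q x \<otimes>\<^bsub>G\<^esub> MM c p q y"
  by (rule hom_mult[OF M_hom])

lemma M_app_inv: "c \<in> X \<Longrightarrow> p \<in> W c \<Longrightarrow> q \<in> W c \<Longrightarrow> x \<in> carrier G \<Longrightarrow>
  MM c p q (inv\<^bsub>G\<^esub> x) = inv\<^bsub>G\<^esub> (MM c p q x)"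
  using group_hom.hom_inv[of G G "MM c p q" x] M_hom by (simp add: group_hom_def group_hom_axioms_def)

lemma M_app_carrier: "c \<in> X \<Longrightarrow> p \<in> W c \<Longrightarrow> q \<in> W c \<Longrightarrow> x \<in> carrier G \<Longrightarrow> MM c p q x \<in> carrier G"
  using Aut_mem_carrier M_carrier by blast

lemma T_kappa: assumes "\<kappa> \<in> KK" "f \<in> carrier Au" "k \<in> Tset f" shows "k \<in> Tset (\<kappa> \<otimes>\<^bsub>Au\<^esub> f)"
proof -
  have kc: "\<kappa> \<in> carrier Au" "k \<in> carrier Au" using assms K_carrier by (auto simp: Tset_def)
  have 1: "f \<otimes>\<^bsub>Au\<^esub> k \<otimes>\<^bsub>Au\<^esub> inv\<^bsub>Au\<^esub> f \<in> KK" using assms by (simp add: Tset_def)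
  have "\<kappa> \<otimes>\<^bsub>Au\<^esub> f \<otimes>\<^bsub>Au\<^esub> k \<otimes>\<^bsub>Au\<^esub> inv\<^bsub>Au\<^esub> (\<kappa> \<otimes>\<^bsub>Au\<^esub> f) =
        \<kappa> \<otimes>\<^bsub>Au\<^esub> (f \<otimes>\<^bsub>Au\<^esub> k \<otimes>\<^bsub>Au\<^esub> inv\<^bsub>Au\<^esub> f) \<otimes>\<^bsub>Au\<^esub> inv\<^bsub>Au\<^esub> \<kappa>"
    using kc assms by (simp add: B.gs)
  moreover have "\<kappa> \<otimes>\<^bsub>Au\<^esub> (f \<otimes>\<^bsub>Au\<^esub> k \<otimes>\<^bsub>Au\<^esub> inv\<^bsub>Au\<^esub> f) \<otimes>\<^bsub>Au\<^esub> inv\<^bsub>Au\<^esub> \<kappa> \<in> KK"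
    using 1 assms(1) subgroup.m_closed[OF K_subgroup] subgroup.m_inv_closed[OF K_subgroup] by blast
  ultimately show ?thesis using kc assms by (simp add: Tset_def)
qed

lemma CC_conj: assumes "p \<in> W c" "q \<in> W c" "p0 \<in> W c" "q0 \<in> W c" "p \<otimes>\<^bsub>G\<^esub> q \<in> CC c"
  shows "(inv\<^bsub>G\<^esub> p0 \<otimes>\<^bsub>G\<^esub> p \<otimes>\<^bsub>G\<^esub> p0) \<otimes>\<^bsub>G\<^esub> (q0 \<otimes>\<^bsub>G\<^esub> q \<otimes>\<^bsub>G\<^esub> inv\<^bsub>G\<^esub> q0) \<in> CC c"
proof -
  define c1 where "c1 = cm p p0 \<otimes>\<^bsub>G\<^esub> cm (inv\<^bsub>G\<^esub> q0) (inv\<^bsub>G\<^esub> q)"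
  have c1: "c1 \<in> CC c" "c1 \<in> W c" using assms by (simp_all add: c1_def)
  have "(inv\<^bsub>G\<^esub> p0 \<otimes>\<^bsub>G\<^esub> p \<otimes>\<^bsub>G\<^esub> p0) \<otimes>\<^bsub>G\<^esub> (q0 \<otimes>\<^bsub>G\<^esub> q \<otimes>\<^bsub>G\<^esub> inv\<^bsub>G\<^esub> q0)
      = cm (inv\<^bsub>G\<^esub> p) (inv\<^bsub>G\<^esub> c1) \<otimes>\<^bsub>G\<^esub> c1 \<otimes>\<^bsub>G\<^esub> (p \<otimes>\<^bsub>G\<^esub> q)"
    using assms by (simp add: c1_def cm_def A.gs)
  thus ?thesis using c1 assms by simp
qed

lemma caseA: assumes "c \<in> Z" "p0 \<in> W c" "q0 \<in> W c" "p \<in> W c" "q \<in> W c" "p \<otimes>\<^bsub>G\<^esub> q \<in> CC c"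
  shows "MM c p q \<in> Tset (MM c p0 q0)"
proof (rule T_of_eq)
  have c: "c \<in> X" using cX assms by simp
  show "MM c p0 q0 \<in> carrier Au" "MM c p q \<in> carrier Au" using c assms by simp_all
  show "MM c (inv\<^bsub>G\<^esub> p0 \<otimes>\<^bsub>G\<^esub> p \<otimes>\<^bsub>G\<^esub> p0) (q0 \<otimes>\<^bsub>G\<^esub> q \<otimes>\<^bsub>G\<^esub> inv\<^bsub>G\<^esub> q0) \<in> KK"
    using K_crit CC_conj assms by simp
  show "MM c p0 q0 \<otimes>\<^bsub>Au\<^esub> MM c p q = MM c (inv\<^bsub>G\<^esub> p0 \<otimes>\<^bsub>G\<^esub> p \<otimes>\<^bsub>G\<^esub> p0) (q0 \<otimes>\<^bsub>G\<^esub> q \<otimes>\<^bsub>G\<^esub> inv\<^bsub>G\<^esub> q0) \<otimes>\<^bsub>Au\<^esub> MM c p0 q0"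
    using assms c by (simp add: M_mult A.gs)
qed

end


context raag begin

lemma SS_av_W: "av \<in> D b \<Longrightarrow> SS {av} \<subseteq> W b"
  by (rule SS_mono) simp

lemma avW: "av \<in> D b \<Longrightarrow> x \<in> SS {av} \<Longrightarrow> x \<in> W b" using SS_av_W by blast

lemma caseB: assumes bZ: "b \<in> Z" and cZ: "c \<in> Z" and bc: "b \<noteq> c" and av: "av \<in> D b" "av \<noteq> c"
  and p0: "p0 \<in> SS {av}" "q0 \<in> SS {av}"
  and pq: "p \<in> W c" "q \<in> W c" "MM b p0 q0 p \<in> W c" "MM b p0 q0 q \<in> W c"
          "MM b p0 q0 p \<otimes>\<^bsub>G\<^esub> MM b p0 q0 q \<in> CC c"
  shows "MM c p q \<in> Tset (MM b p0 q0)"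
proof (rule T_of_eq)
  have X: "b \<in> X" "c \<in> X" "av \<in> X" using bZ cZ av cX DX by auto
  have w0: "p0 \<in> W b" "q0 \<in> W b" using p0 av avW by auto
  let ?f = "MM b p0 q0" and ?F = "MM c (MM b p0 q0 p) (MM b p0 q0 q)"
  show fc: "?f \<in> carrier Au" "MM c p q \<in> carrier Au" using X w0 pq by simp_all
  show "?F \<in> KK" using K_crit cZ pq by simp
  have Fc: "?F \<in> carrier Au" using X pq by simp
  have fix0: "?F p0 = p0" "?F q0 = q0" using M_fix[OF X(2) pq(3,4), of "{av}"] p0 X av by auto
  show "?f \<otimes>\<^bsub>Au\<^esub> MM c p q = ?F \<otimes>\<^bsub>Au\<^esub> ?f"
  proof (rule Aut_eq)
    show "?f \<otimes>\<^bsub>Au\<^esub> MM c p q \<in> carrier Au" "?F \<otimes>\<^bsub>Au\<^esub> ?f \<in> carrier Au" using fc Fc by simp_all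
    show "\<forall>v\<in>X. (?f \<otimes>\<^bsub>Au\<^esub> MM c p q) (gen v) = (?F \<otimes>\<^bsub>Au\<^esub> ?f) (gen v)"
    proof
      fix v assume v: "v \<in> X"
      have l: "(?f \<otimes>\<^bsub>Au\<^esub> MM c p q) (gen v) = ?f (MM c p q (gen v))" using fc v by (simp add: app_mult)
      have r: "(?F \<otimes>\<^bsub>Au\<^esub> ?f) (gen v) = ?F (?f (gen v))" using fc Fc v by (simp add: app_mult)
      show "(?f \<otimes>\<^bsub>Au\<^esub> MM c p q) (gen v) = (?F \<otimes>\<^bsub>Au\<^esub> ?f) (gen v)"
        unfolding l r using v X bc w0 pq fix0
        by (cases "v = c"; cases "v = b") (simp_all add: M_gen M_app_mult M_app_carrier)
    qed
  qed
qed

lemma phiW: assumes bZ: "b \<in> Z" and c: "c \<in> X" and av: "av \<in> D b" "av \<noteq> c"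
  and p0: "p0 \<in> SS {av}" "q0 \<in> SS {av}" and d: "d \<in> D c"
  shows "MM b p0 q0 (gen d) \<in> W c"
proof -
  have X: "b \<in> X" "d \<in> X" using bZ cX DX d by auto
  have w0: "p0 \<in> W b" "q0 \<in> W b" using p0 av avW by auto
  show ?thesis
  proof (cases "d = b")
    case True
    have "av \<in> D c" using av d True dom_trans by (auto simp: D_iff)
    hence "p0 \<in> W c" "q0 \<in> W c" using p0 avW by auto
    thus ?thesis using True X w0 d gen_SS by (simp add: M_gen)
  next
    case False thus ?thesis using X w0 d gen_SS by (simp add: M_gen)
  qed
qed

lemma PQ_B: assumes bZ: "b \<in> Z" and cZ: "c \<in> Z" and bc: "b \<noteq> c" and av: "av \<in> D b" "av \<noteq> c"
  and p0: "p0 \<in> SS {av}" "q0 \<in> SS {av}"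
  shows "(\<forall>d\<in>D c. MM c (inv\<^bsub>G\<^esub> gen d) (gen d) \<in> Tset (MM b p0 q0)) \<and>
         (\<forall>d1\<in>D c. \<forall>d2\<in>D c. MM c \<one>\<^bsub>G\<^esub> (cm (gen d1) (gen d2)) \<in> Tset (MM b p0 q0))"
proof -
  have X: "b \<in> X" "c \<in> X" using bZ cZ cX by auto
  have w0: "p0 \<in> W b" "q0 \<in> W b" using p0 av avW by auto
  have pw: "\<And>d. d \<in> D c \<Longrightarrow> MM b p0 q0 (gen d) \<in> W c" using phiW[OF bZ X(2) av p0] by blast
  have gc: "\<And>d. d \<in> D c \<Longrightarrow> gen d \<in> carrier G" using DX by simp
  show ?thesis
  proof (intro conjI ballI)
    fix d assume d: "d \<in> D c"
    have gw: "gen d \<in> W c" using d gen_SS by simp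
    show "MM c (inv\<^bsub>G\<^esub> gen d) (gen d) \<in> Tset (MM b p0 q0)"
      by (rule caseB[OF bZ cZ bc av p0]) (use gw pw[OF d] X w0 gc[OF d] in \<open>simp_all add: M_app_inv\<close>)
  next
    fix d1 d2 assume d: "d1 \<in> D c" "d2 \<in> D c"
    have gw: "gen d1 \<in> W c" "gen d2 \<in> W c" using d gen_SS by auto
    have e: "MM b p0 q0 (cm (gen d1) (gen d2)) = cm (MM b p0 q0 (gen d1)) (MM b p0 q0 (gen d2))"
      using X w0 gc d by (simp add: cm_def M_app_mult M_app_inv M_app_carrier)
    show "MM c \<one>\<^bsub>G\<^esub> (cm (gen d1) (gen d2)) \<in> Tset (MM b p0 q0)"
      by (rule caseB[OF bZ cZ bc av p0]) (use gw pw d X w0 e in \<open>simp_all add: hom_one[OF M_hom] A.group_axioms\<close>)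
  qed
qed

end


context raag begin

lemma M_app_one: "c \<in> X \<Longrightarrow> p \<in> W c \<Longrightarrow> q \<in> W c \<Longrightarrow> MM c p q \<one>\<^bsub>G\<^esub> = \<one>\<^bsub>G\<^esub>"
  using hom_one[OF M_hom A.group_axioms A.group_axioms] by blast

lemma Dminus_W: assumes "c \<in> D b" shows "SS (D c - {b}) \<subseteq> W b"
proof (rule SS_mono, rule subsetI)
  fix d assume "d \<in> D c - {b}"
  thus "d \<in> D b" using assms dom_trans by (auto simp: D_iff)
qed

lemma C1: assumes bZ: "b \<in> Z" and cZ: "c \<in> Z" and bc: "b \<noteq> c" and cb: "c \<in> D b"
  and g: "g = gen c \<or> g = inv\<^bsub>G\<^esub> gen c"
  and pq: "p \<in> SS (D c - {b})" "q \<in> SS (D c - {b})" "p \<otimes>\<^bsub>G\<^esub> q \<in> CC b" "p \<otimes>\<^bsub>G\<^esub> q \<in> CC c"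
  shows "MM c p q \<in> Tset (MM b \<one>\<^bsub>G\<^esub> g)"
proof -
  have X: "b \<in> X" "c \<in> X" using bZ cZ cX by auto
  have DX': "D c - {b} \<subseteq> X" using D_X by auto
  have pqc: "p \<in> W c" "q \<in> W c" using pq SS_mono[of "D c - {b}" "D c"] by auto
  have pqb: "p \<in> W b" "q \<in> W b" using pq Dminus_W[OF cb] by auto
  have Cb: "gen c \<in> W b" using cb gen_SS by simp
  have gb: "g \<in> W b" using g Cb by auto
  define kg where "kg = MM c p q g"
  have kg: "kg = p \<otimes>\<^bsub>G\<^esub> gen c \<otimes>\<^bsub>G\<^esub> q \<or> kg = inv\<^bsub>G\<^esub> (p \<otimes>\<^bsub>G\<^esub> gen c \<otimes>\<^bsub>G\<^esub> q)"
    using g X pqc by (auto simp: kg_def M_gen M_app_inv)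
  have kgb: "kg \<in> W b" using kg pqb Cb by auto
  define A' where "A' = insert c (D c - {b})"
  have A'X: "A' \<subseteq> X" "b \<notin> A'" using DX' X bc by (auto simp: A'_def)
  have kgA: "kg \<in> SS A'"
  proof -
    have "p \<in> SS A'" "q \<in> SS A'" "gen c \<in> SS A'" using pq SS_mono[of "D c - {b}" A'] gen_SS[of c A']
      by (auto simp: A'_def)
    thus ?thesis using kg A'X by auto
  qed
  have crit: "g \<otimes>\<^bsub>G\<^esub> inv\<^bsub>G\<^esub> kg \<in> CC b"
    using g
  proof
    assume g1: "g = gen c"
    hence "kg = p \<otimes>\<^bsub>G\<^esub> gen c \<otimes>\<^bsub>G\<^esub> q" using X pqc by (simp add: kg_def M_gen)
    hence "g \<otimes>\<^bsub>G\<^esub> inv\<^bsub>G\<^esub> kg = cm (inv\<^bsub>G\<^esub> gen c) q \<otimes>\<^bsub>G\<^esub> inv\<^bsub>G\<^esub> (p \<otimes>\<^bsub>G\<^esub> q)"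
      using g1 X pqc by (simp add: cm_def A.gs)
    thus ?thesis using pq pqb Cb by simp
  next
    assume g1: "g = inv\<^bsub>G\<^esub> gen c"
    hence "kg = inv\<^bsub>G\<^esub> (p \<otimes>\<^bsub>G\<^esub> gen c \<otimes>\<^bsub>G\<^esub> q)" using X pqc by (simp add: kg_def M_gen M_app_inv)
    hence "g \<otimes>\<^bsub>G\<^esub> inv\<^bsub>G\<^esub> kg = cm (gen c) (inv\<^bsub>G\<^esub> p) \<otimes>\<^bsub>G\<^esub> (p \<otimes>\<^bsub>G\<^esub> q)"
      using g1 X pqc by (simp add: cm_def A.gs)
    thus ?thesis using pq pqb Cb by simp
  qed
  let ?f = "MM b \<one>\<^bsub>G\<^esub> g" and ?k = "MM c p q" and ?F = "MM b \<one>\<^bsub>G\<^esub> (g \<otimes>\<^bsub>G\<^esub> inv\<^bsub>G\<^esub> kg)"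
  have gi: "g \<otimes>\<^bsub>G\<^esub> inv\<^bsub>G\<^esub> kg \<in> W b" using gb kgb by simp
  have cars: "?f \<in> carrier Au" "?k \<in> carrier Au" "?F \<in> carrier Au" using X gb pqc gi by simp_all
  have FK: "?F \<in> KK" using K_crit[OF bZ _ gi] crit by simp
  have kK: "?k \<in> KK" using K_crit[OF cZ pqc pq(4)] .
  have fx: "?f p = p" "?f q = q" "?F p = p" "?F q = q" "?F kg = kg"
    using M_fix[OF X(1) _ _ DX', of _ _ p] M_fix[OF X(1) _ _ DX', of _ _ q] M_fix[OF X(1) _ _ A'X(1) A'X(2) kgA]
      pq gb gi by auto
  show ?thesis
  proof (rule T_of_eq[OF cars(1) cars(2)])
    show "?F \<otimes>\<^bsub>Au\<^esub> ?k \<in> KK" using FK kK subgroup.m_closed[OF K_subgroup] by blast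
    show "?f \<otimes>\<^bsub>Au\<^esub> ?k = ?F \<otimes>\<^bsub>Au\<^esub> ?k \<otimes>\<^bsub>Au\<^esub> ?f"
    proof (rule Aut_eq)
      show "?f \<otimes>\<^bsub>Au\<^esub> ?k \<in> carrier Au" "?F \<otimes>\<^bsub>Au\<^esub> ?k \<otimes>\<^bsub>Au\<^esub> ?f \<in> carrier Au" using cars by simp_all
      show "\<forall>v\<in>X. (?f \<otimes>\<^bsub>Au\<^esub> ?k) (gen v) = (?F \<otimes>\<^bsub>Au\<^esub> ?k \<otimes>\<^bsub>Au\<^esub> ?f) (gen v)"
      proof
        fix v assume v: "v \<in> X"
        have l: "(?f \<otimes>\<^bsub>Au\<^esub> ?k) (gen v) = ?f (?k (gen v))" using cars v by (simp add: app_mult)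
        have r: "(?F \<otimes>\<^bsub>Au\<^esub> ?k \<otimes>\<^bsub>Au\<^esub> ?f) (gen v) = ?F (?k (?f (gen v)))" using cars v
          by (simp add: app_mult M_app_carrier X gb)
        show "(?f \<otimes>\<^bsub>Au\<^esub> ?k) (gen v) = (?F \<otimes>\<^bsub>Au\<^esub> ?k \<otimes>\<^bsub>Au\<^esub> ?f) (gen v)"
          unfolding l r using v X bc gb pqc gi fx kgb
          by (cases "v = c"; cases "v = b") (simp_all add: M_gen M_app_mult M_app_carrier M_app_one kg_def[symmetric] A.gs)
      qed
    qed
  qed
qed

end


context raag begin

lemma Pi: assumes bZ: "b \<in> Z" and cZ: "c \<in> Z" and bc: "b \<noteq> c" and cb: "c \<in> D b" and bcD: "b \<in> D c"
  and g: "g = gen c \<or> g = inv\<^bsub>G\<^esub> gen c"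
  shows "MM c (inv\<^bsub>G\<^esub> gen b) (gen b) \<in> Tset (MM b \<one>\<^bsub>G\<^esub> g)"
proof -
  have X: "b \<in> X" "c \<in> X" using bZ cZ cX by auto
  have Cb: "gen c \<in> W b" using cb gen_SS by simp
  have Bc: "gen b \<in> W c" using bcD gen_SS by simp
  have gb: "g \<in> W b" using g Cb by auto
  let ?f = "MM b \<one>\<^bsub>G\<^esub> g" and ?k = "MM c (inv\<^bsub>G\<^esub> gen b) (gen b)"
    and ?F1 = "MM b (inv\<^bsub>G\<^esub> g) g" and ?F2 = "MM c (inv\<^bsub>G\<^esub> gen b) (gen b)"
  have cars: "?f \<in> carrier Au" "?k \<in> carrier Au" "?F1 \<in> carrier Au" "?F2 \<in> carrier Au"
    using X gb Bc by simp_all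
  have FK: "?F1 \<otimes>\<^bsub>Au\<^esub> ?F2 \<in> KK"
    using K_crit[OF bZ, of "inv\<^bsub>G\<^esub> g" g] K_crit[OF cZ, of "inv\<^bsub>G\<^esub> gen b" "gen b"] gb Bc
      subgroup.m_closed[OF K_subgroup] by simp
  show ?thesis
  proof (rule T_of_eq[OF cars(1) cars(2) FK])
    show "?f \<otimes>\<^bsub>Au\<^esub> ?k = ?F1 \<otimes>\<^bsub>Au\<^esub> ?F2 \<otimes>\<^bsub>Au\<^esub> ?f"
    proof (rule Aut_eq)
      show "?f \<otimes>\<^bsub>Au\<^esub> ?k \<in> carrier Au" "?F1 \<otimes>\<^bsub>Au\<^esub> ?F2 \<otimes>\<^bsub>Au\<^esub> ?f \<in> carrier Au" using cars by simp_all
      show "\<forall>v\<in>X. (?f \<otimes>\<^bsub>Au\<^esub> ?k) (gen v) = (?F1 \<otimes>\<^bsub>Au\<^esub> ?F2 \<otimes>\<^bsub>Au\<^esub> ?f) (gen v)"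
      proof
        fix v assume v: "v \<in> X"
        have l: "(?f \<otimes>\<^bsub>Au\<^esub> ?k) (gen v) = ?f (?k (gen v))" using cars v by (simp add: app_mult)
        have r: "(?F1 \<otimes>\<^bsub>Au\<^esub> ?F2 \<otimes>\<^bsub>Au\<^esub> ?f) (gen v) = ?F1 (?F2 (?f (gen v)))" using cars v
          by (simp add: app_mult M_app_carrier X gb)
        have B: "gen b \<in> carrier G" "gen c \<in> carrier G" "g \<in> carrier G" using X gb by auto
        have fB: "?f (gen b) = gen b \<otimes>\<^bsub>G\<^esub> g" "?f (gen c) = gen c" using X gb bc by (simp_all add: M_gen)
        have kB: "?k (gen b) = gen b" "?k (gen c) = inv\<^bsub>G\<^esub> gen b \<otimes>\<^bsub>G\<^esub> gen c \<otimes>\<^bsub>G\<^esub> gen b" using X Bc bc by (simp_all add: M_gen)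
        have F1B: "?F1 (gen b) = inv\<^bsub>G\<^esub> g \<otimes>\<^bsub>G\<^esub> gen b \<otimes>\<^bsub>G\<^esub> g" "?F1 (gen c) = gen c" using X gb bc by (simp_all add: M_gen)
        have F1g: "?F1 g = g" using g F1B B X gb Cb by (elim disjE) (simp_all add: M_app_inv)
        have kg: "?k g = inv\<^bsub>G\<^esub> gen b \<otimes>\<^bsub>G\<^esub> gen c \<otimes>\<^bsub>G\<^esub> gen b \<or> ?k g = inv\<^bsub>G\<^esub> (inv\<^bsub>G\<^esub> gen b \<otimes>\<^bsub>G\<^esub> gen c \<otimes>\<^bsub>G\<^esub> gen b)"
          using g kB B X Bc by (elim disjE) (simp_all add: M_app_inv)
        have gc: "g \<otimes>\<^bsub>G\<^esub> gen c = gen c \<otimes>\<^bsub>G\<^esub> g" using g B by (auto simp: A.gs)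
        show "(?f \<otimes>\<^bsub>Au\<^esub> ?k) (gen v) = (?F1 \<otimes>\<^bsub>Au\<^esub> ?F2 \<otimes>\<^bsub>Au\<^esub> ?f) (gen v)"
        proof (cases "v = c")
          case True
          have "?f (?k (gen v)) = inv\<^bsub>G\<^esub> (gen b \<otimes>\<^bsub>G\<^esub> g) \<otimes>\<^bsub>G\<^esub> gen c \<otimes>\<^bsub>G\<^esub> (gen b \<otimes>\<^bsub>G\<^esub> g)"
            using True kB fB B X gb by (simp add: M_app_mult M_app_inv)
          moreover have "?F1 (?F2 (?f (gen v))) = inv\<^bsub>G\<^esub> (inv\<^bsub>G\<^esub> g \<otimes>\<^bsub>G\<^esub> gen b \<otimes>\<^bsub>G\<^esub> g) \<otimes>\<^bsub>G\<^esub> gen c \<otimes>\<^bsub>G\<^esub> (inv\<^bsub>G\<^esub> g \<otimes>\<^bsub>G\<^esub> gen b \<otimes>\<^bsub>G\<^esub> g)"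
            using True kB fB F1B B X gb by (simp add: M_app_mult M_app_inv)
          moreover have "inv\<^bsub>G\<^esub> (gen b \<otimes>\<^bsub>G\<^esub> g) \<otimes>\<^bsub>G\<^esub> gen c \<otimes>\<^bsub>G\<^esub> (gen b \<otimes>\<^bsub>G\<^esub> g) =
              inv\<^bsub>G\<^esub> (inv\<^bsub>G\<^esub> g \<otimes>\<^bsub>G\<^esub> gen b \<otimes>\<^bsub>G\<^esub> g) \<otimes>\<^bsub>G\<^esub> gen c \<otimes>\<^bsub>G\<^esub> (inv\<^bsub>G\<^esub> g \<otimes>\<^bsub>G\<^esub> gen b \<otimes>\<^bsub>G\<^esub> g)"
            using g B by (elim disjE) (simp_all add: A.gs)
          ultimately show ?thesis using l r by simp
        next
          case False
          show ?thesis
          proof (cases "v = b")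
            case True
            have "?f (?k (gen v)) = gen b \<otimes>\<^bsub>G\<^esub> g" using True kB fB by simp
            moreover have "?F1 (?F2 (?f (gen v))) = (inv\<^bsub>G\<^esub> g \<otimes>\<^bsub>G\<^esub> gen b \<otimes>\<^bsub>G\<^esub> g) \<otimes>\<^bsub>G\<^esub> ?F1 (?k g)"
              using True kB fB F1B B X gb Bc by (simp add: M_app_mult M_app_carrier)
            moreover have "?F1 (?k g) = inv\<^bsub>G\<^esub> g \<otimes>\<^bsub>G\<^esub> inv\<^bsub>G\<^esub> gen b \<otimes>\<^bsub>G\<^esub> g \<otimes>\<^bsub>G\<^esub> gen b \<otimes>\<^bsub>G\<^esub> g"
              using g
            proof (elim disjE)
              assume g1: "g = gen c"
              have "?k g = inv\<^bsub>G\<^esub> gen b \<otimes>\<^bsub>G\<^esub> gen c \<otimes>\<^bsub>G\<^esub> gen b" using g1 kB by simp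
              hence "?F1 (?k g) = inv\<^bsub>G\<^esub> (?F1 (gen b)) \<otimes>\<^bsub>G\<^esub> ?F1 (gen c) \<otimes>\<^bsub>G\<^esub> ?F1 (gen b)"
                using B X gb by (simp add: M_app_mult M_app_inv)
              thus ?thesis using F1B g1 B by (simp add: A.gs)
            next
              assume g1: "g = inv\<^bsub>G\<^esub> gen c"
              have "?k g = inv\<^bsub>G\<^esub> (inv\<^bsub>G\<^esub> gen b \<otimes>\<^bsub>G\<^esub> gen c \<otimes>\<^bsub>G\<^esub> gen b)" using g1 kB B X Bc by (simp add: M_app_inv)
              hence "?F1 (?k g) = inv\<^bsub>G\<^esub> (inv\<^bsub>G\<^esub> (?F1 (gen b)) \<otimes>\<^bsub>G\<^esub> ?F1 (gen c) \<otimes>\<^bsub>G\<^esub> ?F1 (gen b))"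
                using B X gb by (simp add: M_app_mult M_app_inv)
              thus ?thesis using F1B g1 B by (simp add: A.gs)
            qed
            ultimately show ?thesis unfolding l r using B by (simp add: A.gs)
          next
            case False2: False
            thus ?thesis unfolding l r using False v X gb Bc by (simp add: M_gen)
          qed
        qed
      qed
    qed
  qed
qed

end


context raag begin

lemma Qii_pos: assumes bZ: "b \<in> Z" and cZ: "c \<in> Z" and bc: "b \<noteq> c" and cb: "c \<in> D b" and bcD: "b \<in> D c"
  and y: "y \<in> D c" "y \<noteq> b"
  shows "MM c \<one>\<^bsub>G\<^esub> (cm (gen b) (gen y)) \<in> Tset (MM b \<one>\<^bsub>G\<^esub> (gen c))"
proof -
  have X: "b \<in> X" "c \<in> X" "y \<in> X" using bZ cZ cX DX y by auto
  have yc: "y \<noteq> c" using y by (auto simp: D_iff)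
  have yb: "y \<in> D b" using y cb dom_trans by (auto simp: D_iff)
  have Cb: "gen c \<in> W b" using cb gen_SS by simp
  have Bc: "gen b \<in> W c" using bcD gen_SS by simp
  have Yc: "gen y \<in> W c" using y gen_SS by simp
  have Yb: "gen y \<in> W b" using yb gen_SS by simp
  have B: "gen b \<in> carrier G" "gen c \<in> carrier G" "gen y \<in> carrier G" using X by auto
  let ?B = "gen b" and ?C = "gen c" and ?Y = "gen y"
  let ?f = "MM b \<one>\<^bsub>G\<^esub> ?C" and ?k = "MM c \<one>\<^bsub>G\<^esub> (cm ?B ?Y)"
    and ?F1 = "MM c (inv\<^bsub>G\<^esub> ?B \<otimes>\<^bsub>G\<^esub> inv\<^bsub>G\<^esub> ?Y \<otimes>\<^bsub>G\<^esub> ?B) ?Y"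
    and ?F2 = "MM b ?Y (?C \<otimes>\<^bsub>G\<^esub> inv\<^bsub>G\<^esub> ?Y \<otimes>\<^bsub>G\<^esub> inv\<^bsub>G\<^esub> ?C)"
  have w1: "inv\<^bsub>G\<^esub> ?B \<otimes>\<^bsub>G\<^esub> inv\<^bsub>G\<^esub> ?Y \<otimes>\<^bsub>G\<^esub> ?B \<in> W c" "?C \<otimes>\<^bsub>G\<^esub> inv\<^bsub>G\<^esub> ?Y \<otimes>\<^bsub>G\<^esub> inv\<^bsub>G\<^esub> ?C \<in> W b"
    "cm ?B ?Y \<in> W c" using Bc Yc Cb Yb by simp_all
  have cars: "?f \<in> carrier Au" "?k \<in> carrier Au" "?F1 \<in> carrier Au" "?F2 \<in> carrier Au"
    using X Cb w1 Yc Yb by simp_all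
  have FK: "?F1 \<otimes>\<^bsub>Au\<^esub> ?F2 \<in> KK"
  proof -
    have "(inv\<^bsub>G\<^esub> ?B \<otimes>\<^bsub>G\<^esub> inv\<^bsub>G\<^esub> ?Y \<otimes>\<^bsub>G\<^esub> ?B) \<otimes>\<^bsub>G\<^esub> ?Y = cm ?B ?Y" using B by (simp add: cm_def A.gs)
    hence 1: "?F1 \<in> KK" using K_crit[OF cZ w1(1) Yc] Bc Yc by simp
    have "?Y \<otimes>\<^bsub>G\<^esub> (?C \<otimes>\<^bsub>G\<^esub> inv\<^bsub>G\<^esub> ?Y \<otimes>\<^bsub>G\<^esub> inv\<^bsub>G\<^esub> ?C) = cm (inv\<^bsub>G\<^esub> ?Y) (inv\<^bsub>G\<^esub> ?C)" using B by (simp add: cm_def A.gs)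
    hence 2: "?F2 \<in> KK" using K_crit[OF bZ Yb w1(2)] Yb Cb by simp
    show ?thesis using 1 2 subgroup.m_closed[OF K_subgroup] by blast
  qed
  have fv: "?f ?B = ?B \<otimes>\<^bsub>G\<^esub> ?C" "?f ?C = ?C" "?f ?Y = ?Y" using X Cb bc y by (simp_all add: M_gen)
  have kv: "?k ?B = ?B" "?k ?C = ?C \<otimes>\<^bsub>G\<^esub> cm ?B ?Y" "?k ?Y = ?Y" using X w1 bc yc by (simp_all add: M_gen)
  have F1v: "?F1 ?B = ?B" "?F1 ?C = inv\<^bsub>G\<^esub> ?B \<otimes>\<^bsub>G\<^esub> inv\<^bsub>G\<^esub> ?Y \<otimes>\<^bsub>G\<^esub> ?B \<otimes>\<^bsub>G\<^esub> ?C \<otimes>\<^bsub>G\<^esub> ?Y" "?F1 ?Y = ?Y"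
    using X w1 Yc bc yc by (simp_all add: M_gen)
  have F2v: "?F2 ?B = ?Y \<otimes>\<^bsub>G\<^esub> ?B \<otimes>\<^bsub>G\<^esub> (?C \<otimes>\<^bsub>G\<^esub> inv\<^bsub>G\<^esub> ?Y \<otimes>\<^bsub>G\<^esub> inv\<^bsub>G\<^esub> ?C)" "?F2 ?C = ?C" "?F2 ?Y = ?Y"
    using X w1 Yb bc y by (simp_all add: M_gen)
  show ?thesis
  proof (rule T_of_eq[OF cars(1) cars(2) FK])
    show "?f \<otimes>\<^bsub>Au\<^esub> ?k = ?F1 \<otimes>\<^bsub>Au\<^esub> ?F2 \<otimes>\<^bsub>Au\<^esub> ?f"
    proof (rule Aut_eq)
      show "?f \<otimes>\<^bsub>Au\<^esub> ?k \<in> carrier Au" "?F1 \<otimes>\<^bsub>Au\<^esub> ?F2 \<otimes>\<^bsub>Au\<^esub> ?f \<in> carrier Au" using cars by simp_all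
      show "\<forall>v\<in>X. (?f \<otimes>\<^bsub>Au\<^esub> ?k) (gen v) = (?F1 \<otimes>\<^bsub>Au\<^esub> ?F2 \<otimes>\<^bsub>Au\<^esub> ?f) (gen v)"
      proof
        fix v assume v: "v \<in> X"
        have l: "(?f \<otimes>\<^bsub>Au\<^esub> ?k) (gen v) = ?f (?k (gen v))" using cars v by (simp add: app_mult)
        have r: "(?F1 \<otimes>\<^bsub>Au\<^esub> ?F2 \<otimes>\<^bsub>Au\<^esub> ?f) (gen v) = ?F1 (?F2 (?f (gen v)))" using cars v
          by (simp add: app_mult M_app_carrier X Cb)
        have hh: "?f \<in> hom G G" "?k \<in> hom G G" "?F1 \<in> hom G G" "?F2 \<in> hom G G"
          using cars Aut_hom by auto
        consider "v = c" | "v = b" | "v \<noteq> c" "v \<noteq> b" by blast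
        thus "(?f \<otimes>\<^bsub>Au\<^esub> ?k) (gen v) = (?F1 \<otimes>\<^bsub>Au\<^esub> ?F2 \<otimes>\<^bsub>Au\<^esub> ?f) (gen v)"
        proof cases
          case 1
          have "?f (?k (gen v)) = ?C \<otimes>\<^bsub>G\<^esub> cm (?B \<otimes>\<^bsub>G\<^esub> ?C) ?Y"
            using 1 kv fv B X Cb by (simp add: M_app_mult M_app_inv cm_def)
          moreover have "?F1 (?F2 (?f (gen v))) = inv\<^bsub>G\<^esub> ?B \<otimes>\<^bsub>G\<^esub> inv\<^bsub>G\<^esub> ?Y \<otimes>\<^bsub>G\<^esub> ?B \<otimes>\<^bsub>G\<^esub> ?C \<otimes>\<^bsub>G\<^esub> ?Y"
            using 1 fv F2v F1v by simp
          ultimately show ?thesis using l r B by (simp add: cm_def A.gs)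
        next
          case 2
          have "?f (?k (gen v)) = ?B \<otimes>\<^bsub>G\<^esub> ?C" using 2 kv fv by simp
          moreover have "?F1 (?F2 (?f (gen v))) = ?F1 (?Y \<otimes>\<^bsub>G\<^esub> ?B \<otimes>\<^bsub>G\<^esub> (?C \<otimes>\<^bsub>G\<^esub> inv\<^bsub>G\<^esub> ?Y \<otimes>\<^bsub>G\<^esub> inv\<^bsub>G\<^esub> ?C) \<otimes>\<^bsub>G\<^esub> ?C)"
            using 2 fv F2v B X w1 Yb by (simp add: M_app_mult)
          moreover have "\<dots> = ?Y \<otimes>\<^bsub>G\<^esub> ?B \<otimes>\<^bsub>G\<^esub> (?F1 ?C \<otimes>\<^bsub>G\<^esub> inv\<^bsub>G\<^esub> ?Y \<otimes>\<^bsub>G\<^esub> inv\<^bsub>G\<^esub> (?F1 ?C)) \<otimes>\<^bsub>G\<^esub> ?F1 ?C"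
            using F1v B X w1 Yc by (simp add: M_app_mult M_app_inv M_app_carrier)
          ultimately show ?thesis using l r B F1v by (simp add: A.gs)
        next
          case 3
          thus ?thesis using l r v X w1 Yc Yb Cb by (simp add: M_gen)
        qed
      qed
    qed
  qed
qed

lemma Qii_neg: assumes bZ: "b \<in> Z" and cZ: "c \<in> Z" and bc: "b \<noteq> c" and cb: "c \<in> D b" and bcD: "b \<in> D c"
  and y: "y \<in> D c" "y \<noteq> b"
  shows "MM c (cm (gen y) (gen b)) \<one>\<^bsub>G\<^esub> \<in> Tset (MM b \<one>\<^bsub>G\<^esub> (inv\<^bsub>G\<^esub> gen c))"
proof -
  have X: "b \<in> X" "c \<in> X" "y \<in> X" using bZ cZ cX DX y by auto
  have yc: "y \<noteq> c" using y by (auto simp: D_iff)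
  have yb: "y \<in> D b" using y cb dom_trans by (auto simp: D_iff)
  have Cb: "gen c \<in> W b" using cb gen_SS by simp
  have Bc: "gen b \<in> W c" using bcD gen_SS by simp
  have Yc: "gen y \<in> W c" using y gen_SS by simp
  have Yb: "gen y \<in> W b" using yb gen_SS by simp
  have B: "gen b \<in> carrier G" "gen c \<in> carrier G" "gen y \<in> carrier G" using X by auto
  let ?B = "gen b" and ?C = "gen c" and ?Y = "gen y"
  let ?f = "MM b \<one>\<^bsub>G\<^esub> (inv\<^bsub>G\<^esub> ?C)" and ?k = "MM c (cm ?Y ?B) \<one>\<^bsub>G\<^esub>"
    and ?F1 = "MM c (inv\<^bsub>G\<^esub> ?Y) (inv\<^bsub>G\<^esub> ?B \<otimes>\<^bsub>G\<^esub> ?Y \<otimes>\<^bsub>G\<^esub> ?B)"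
    and ?F2 = "MM b ?Y (inv\<^bsub>G\<^esub> ?C \<otimes>\<^bsub>G\<^esub> inv\<^bsub>G\<^esub> ?Y \<otimes>\<^bsub>G\<^esub> ?C)"
  have w1: "inv\<^bsub>G\<^esub> ?B \<otimes>\<^bsub>G\<^esub> ?Y \<otimes>\<^bsub>G\<^esub> ?B \<in> W c" "inv\<^bsub>G\<^esub> ?C \<otimes>\<^bsub>G\<^esub> inv\<^bsub>G\<^esub> ?Y \<otimes>\<^bsub>G\<^esub> ?C \<in> W b"
    "cm ?Y ?B \<in> W c" "inv\<^bsub>G\<^esub> ?Y \<in> W c" "inv\<^bsub>G\<^esub> ?C \<in> W b" using Bc Yc Cb Yb by simp_all
  have cars: "?f \<in> carrier Au" "?k \<in> carrier Au" "?F1 \<in> carrier Au" "?F2 \<in> carrier Au"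
    using X Cb w1 Yc Yb by simp_all
  have FK: "?F1 \<otimes>\<^bsub>Au\<^esub> ?F2 \<in> KK"
  proof -
    have "inv\<^bsub>G\<^esub> ?Y \<otimes>\<^bsub>G\<^esub> (inv\<^bsub>G\<^esub> ?B \<otimes>\<^bsub>G\<^esub> ?Y \<otimes>\<^bsub>G\<^esub> ?B) = cm ?Y ?B" using B by (simp add: cm_def A.gs)
    hence 1: "?F1 \<in> KK" using K_crit[OF cZ w1(4) w1(1)] Bc Yc by simp
    have "?Y \<otimes>\<^bsub>G\<^esub> (inv\<^bsub>G\<^esub> ?C \<otimes>\<^bsub>G\<^esub> inv\<^bsub>G\<^esub> ?Y \<otimes>\<^bsub>G\<^esub> ?C) = cm (inv\<^bsub>G\<^esub> ?Y) ?C" using B by (simp add: cm_def A.gs)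
    hence 2: "?F2 \<in> KK" using K_crit[OF bZ Yb w1(2)] Yb Cb by simp
    show ?thesis using 1 2 subgroup.m_closed[OF K_subgroup] by blast
  qed
  have fv: "?f ?B = ?B \<otimes>\<^bsub>G\<^esub> inv\<^bsub>G\<^esub> ?C" "?f ?C = ?C" "?f ?Y = ?Y" using X w1 bc y by (simp_all add: M_gen)
  have kv: "?k ?B = ?B" "?k ?C = cm ?Y ?B \<otimes>\<^bsub>G\<^esub> ?C" "?k ?Y = ?Y" using X w1 bc yc by (simp_all add: M_gen)
  have F1v: "?F1 ?B = ?B" "?F1 ?C = inv\<^bsub>G\<^esub> ?Y \<otimes>\<^bsub>G\<^esub> ?C \<otimes>\<^bsub>G\<^esub> (inv\<^bsub>G\<^esub> ?B \<otimes>\<^bsub>G\<^esub> ?Y \<otimes>\<^bsub>G\<^esub> ?B)" "?F1 ?Y = ?Y"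
    using X w1 Yc bc yc by (simp_all add: M_gen)
  have F2v: "?F2 ?B = ?Y \<otimes>\<^bsub>G\<^esub> ?B \<otimes>\<^bsub>G\<^esub> (inv\<^bsub>G\<^esub> ?C \<otimes>\<^bsub>G\<^esub> inv\<^bsub>G\<^esub> ?Y \<otimes>\<^bsub>G\<^esub> ?C)" "?F2 ?C = ?C" "?F2 ?Y = ?Y"
    using X w1 Yb bc y by (simp_all add: M_gen)
  show ?thesis
  proof (rule T_of_eq[OF cars(1) cars(2) FK])
    show "?f \<otimes>\<^bsub>Au\<^esub> ?k = ?F1 \<otimes>\<^bsub>Au\<^esub> ?F2 \<otimes>\<^bsub>Au\<^esub> ?f"
    proof (rule Aut_eq)
      show "?f \<otimes>\<^bsub>Au\<^esub> ?k \<in> carrier Au" "?F1 \<otimes>\<^bsub>Au\<^esub> ?F2 \<otimes>\<^bsub>Au\<^esub> ?f \<in> carrier Au" using cars by simp_all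
      show "\<forall>v\<in>X. (?f \<otimes>\<^bsub>Au\<^esub> ?k) (gen v) = (?F1 \<otimes>\<^bsub>Au\<^esub> ?F2 \<otimes>\<^bsub>Au\<^esub> ?f) (gen v)"
      proof
        fix v assume v: "v \<in> X"
        have l: "(?f \<otimes>\<^bsub>Au\<^esub> ?k) (gen v) = ?f (?k (gen v))" using cars v by (simp add: app_mult)
        have r: "(?F1 \<otimes>\<^bsub>Au\<^esub> ?F2 \<otimes>\<^bsub>Au\<^esub> ?f) (gen v) = ?F1 (?F2 (?f (gen v)))" using cars v
          by (simp add: app_mult M_app_carrier X w1)
        have hh: "?f \<in> hom G G" "?k \<in> hom G G" "?F1 \<in> hom G G" "?F2 \<in> hom G G"
          using cars Aut_hom by auto
        consider "v = c" | "v = b" | "v \<noteq> c" "v \<noteq> b" by blast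
        thus "(?f \<otimes>\<^bsub>Au\<^esub> ?k) (gen v) = (?F1 \<otimes>\<^bsub>Au\<^esub> ?F2 \<otimes>\<^bsub>Au\<^esub> ?f) (gen v)"
        proof cases
          case 1
          have "?f (?k (gen v)) = cm ?Y (?B \<otimes>\<^bsub>G\<^esub> inv\<^bsub>G\<^esub> ?C) \<otimes>\<^bsub>G\<^esub> ?C"
            using 1 kv fv B X w1 by (simp add: M_app_mult M_app_inv cm_def)
          moreover have "?F1 (?F2 (?f (gen v))) = inv\<^bsub>G\<^esub> ?Y \<otimes>\<^bsub>G\<^esub> ?C \<otimes>\<^bsub>G\<^esub> (inv\<^bsub>G\<^esub> ?B \<otimes>\<^bsub>G\<^esub> ?Y \<otimes>\<^bsub>G\<^esub> ?B)"
            using 1 fv F2v F1v by simp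
          ultimately show ?thesis using l r B by (simp add: cm_def A.gs)
        next
          case 2
          have "?f (?k (gen v)) = ?B \<otimes>\<^bsub>G\<^esub> inv\<^bsub>G\<^esub> ?C" using 2 kv fv by simp
          moreover have "?F1 (?F2 (?f (gen v))) = ?F1 (?Y \<otimes>\<^bsub>G\<^esub> ?B \<otimes>\<^bsub>G\<^esub> (inv\<^bsub>G\<^esub> ?C \<otimes>\<^bsub>G\<^esub> inv\<^bsub>G\<^esub> ?Y \<otimes>\<^bsub>G\<^esub> ?C) \<otimes>\<^bsub>G\<^esub> inv\<^bsub>G\<^esub> ?C)"
            using 2 fv F2v B X w1 Yb by (simp add: M_app_mult M_app_inv)
          moreover have "\<dots> = ?Y \<otimes>\<^bsub>G\<^esub> ?B \<otimes>\<^bsub>G\<^esub> (inv\<^bsub>G\<^esub> (?F1 ?C) \<otimes>\<^bsub>G\<^esub> inv\<^bsub>G\<^esub> ?Y \<otimes>\<^bsub>G\<^esub> ?F1 ?C) \<otimes>\<^bsub>G\<^esub> inv\<^bsub>G\<^esub> (?F1 ?C)"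
            using F1v B X w1 Yc by (simp add: M_app_mult M_app_inv M_app_carrier)
          ultimately show ?thesis using l r B F1v by (simp add: A.gs)
        next
          case 3
          thus ?thesis using l r v X w1 Yc Yb Cb by (simp add: M_gen)
        qed
      qed
    qed
  qed
qed

end


context raag begin

lemma PQ_C: assumes bZ: "b \<in> Z" and cZ: "c \<in> Z" and bc: "b \<noteq> c" and cb: "c \<in> D b"
  and g: "g = gen c \<or> g = inv\<^bsub>G\<^esub> gen c"
  shows "(\<forall>d\<in>D c. MM c (inv\<^bsub>G\<^esub> gen d) (gen d) \<in> Tset (MM b \<one>\<^bsub>G\<^esub> g)) \<and>
         (\<forall>d1\<in>D c. \<forall>d2\<in>D c. MM c \<one>\<^bsub>G\<^esub> (cm (gen d1) (gen d2)) \<in> Tset (MM b \<one>\<^bsub>G\<^esub> g))"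
proof -
  have X: "b \<in> X" "c \<in> X" using bZ cZ cX by auto
  have Cb: "gen c \<in> W b" using cb gen_SS by simp
  have gb: "g \<in> W b" using g Cb by auto
  have fc: "MM b \<one>\<^bsub>G\<^esub> g \<in> carrier Au" using X gb by simp
  have TS: "subgroup (Tset (MM b \<one>\<^bsub>G\<^esub> g)) Au" by (rule Tset_subgroup[OF fc])
  have DmD: "\<And>d. d \<in> D c \<Longrightarrow> d \<noteq> b \<Longrightarrow> d \<in> D b" using cb dom_trans by (auto simp: D_iff)
  have P: "\<forall>d\<in>D c. MM c (inv\<^bsub>G\<^esub> gen d) (gen d) \<in> Tset (MM b \<one>\<^bsub>G\<^esub> g)"
  proof
    fix d assume d: "d \<in> D c"
    show "MM c (inv\<^bsub>G\<^esub> gen d) (gen d) \<in> Tset (MM b \<one>\<^bsub>G\<^esub> g)"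
    proof (cases "d = b")
      case True thus ?thesis using Pi[OF bZ cZ bc cb _ g] d by simp
    next
      case False
      have "gen d \<in> SS (D c - {b})" using d False gen_SS by simp
      moreover have "gen d \<in> carrier G" using d DX by simp
      moreover have "D c - {b} \<subseteq> X" using D_X by auto
      ultimately show ?thesis using C1[OF bZ cZ bc cb g, of "inv\<^bsub>G\<^esub> gen d" "gen d"] SS_inv[of "D c - {b}" "gen d"] by simp
    qed
  qed
  have Qb: "\<And>y. b \<in> D c \<Longrightarrow> y \<in> D c \<Longrightarrow> y \<noteq> b \<Longrightarrow> MM c \<one>\<^bsub>G\<^esub> (cm (gen b) (gen y)) \<in> Tset (MM b \<one>\<^bsub>G\<^esub> g)"
  proof -
    fix y assume bcD: "b \<in> D c" and y: "y \<in> D c" "y \<noteq> b"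
    show "MM c \<one>\<^bsub>G\<^esub> (cm (gen b) (gen y)) \<in> Tset (MM b \<one>\<^bsub>G\<^esub> g)"
      using g
    proof (elim disjE)
      assume "g = gen c" thus ?thesis using Qii_pos[OF bZ cZ bc cb bcD y] by simp
    next
      assume g1: "g = inv\<^bsub>G\<^esub> gen c"
      have B: "gen b \<in> W c" "gen y \<in> W c" using bcD y gen_SS by auto
      define h where "h = cm (gen y) (gen b)"
      have hw: "h \<in> W c" using B by (simp add: h_def)
      have k': "MM c h \<one>\<^bsub>G\<^esub> \<in> Tset (MM b \<one>\<^bsub>G\<^esub> g)" using Qii_neg[OF bZ cZ bc cb bcD y] g1 by (simp add: h_def)
      have k2: "MM c (inv\<^bsub>G\<^esub> (inv\<^bsub>G\<^esub> h)) (inv\<^bsub>G\<^esub> h) \<in> Tset (MM b \<one>\<^bsub>G\<^esub> g)"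
        using GL_P[OF TS X(2) P W_inv[OF hw]] .
      have e1: "inv\<^bsub>Au\<^esub> (MM c (inv\<^bsub>G\<^esub> (inv\<^bsub>G\<^esub> h)) (inv\<^bsub>G\<^esub> h)) \<otimes>\<^bsub>Au\<^esub> MM c h \<one>\<^bsub>G\<^esub> = MM c \<one>\<^bsub>G\<^esub> h"
        using hw X M_Aut(2)[OF X(2)] M_mult[OF X(2)] by (simp add: A.gs)
      have "MM c \<one>\<^bsub>G\<^esub> h \<in> Tset (MM b \<one>\<^bsub>G\<^esub> g)"
        using subgroup.m_closed[OF TS subgroup.m_inv_closed[OF TS k2] k'] e1 by simp
      hence "inv\<^bsub>Au\<^esub> (MM c \<one>\<^bsub>G\<^esub> h) \<in> Tset (MM b \<one>\<^bsub>G\<^esub> g)" using subgroup.m_inv_closed[OF TS] by blast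
      moreover have "inv\<^bsub>Au\<^esub> (MM c \<one>\<^bsub>G\<^esub> h) = MM c \<one>\<^bsub>G\<^esub> (cm (gen b) (gen y))"
        using M_Aut(2)[OF X(2) _ hw] B by (simp add: h_def cm_def A.gs)
      ultimately show ?thesis by simp
    qed
  qed
  show ?thesis
  proof (intro conjI P ballI)
    fix d1 d2 assume d: "d1 \<in> D c" "d2 \<in> D c"
    have gc: "gen d1 \<in> carrier G" "gen d2 \<in> carrier G" using d DX by auto
    show "MM c \<one>\<^bsub>G\<^esub> (cm (gen d1) (gen d2)) \<in> Tset (MM b \<one>\<^bsub>G\<^esub> g)"
    proof (cases "d1 = b")
      case True
      show ?thesis
      proof (cases "d2 = b")
        case True2: True
        have "cm (gen d1) (gen d2) = \<one>\<^bsub>G\<^esub>" using True True2 gc by (simp add: cm_def A.gs)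
        thus ?thesis using M_one[OF X(2)] subgroup.one_closed[OF TS] by simp
      next
        case False
        thus ?thesis using Qb[OF _ d(2)] True d(1) by simp
      qed
    next
      case False
      show ?thesis
      proof (cases "d2 = b")
        case True
        have w: "cm (gen b) (gen d1) \<in> W c" using d True gen_SS by simp
        have "inv\<^bsub>Au\<^esub> (MM c \<one>\<^bsub>G\<^esub> (cm (gen b) (gen d1))) = MM c \<one>\<^bsub>G\<^esub> (cm (gen d1) (gen d2))"
          using M_Aut(2)[OF X(2) _ w] True gc by (simp add: cm_def A.gs)
        thus ?thesis using subgroup.m_inv_closed[OF TS Qb[OF _ d(1) False]] True d(2) by simp
      next
        case False2: False
        have s: "gen d1 \<in> SS (D c - {b})" "gen d2 \<in> SS (D c - {b})" using d False False2 gen_SS by auto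
        have "gen d1 \<in> W b" "gen d2 \<in> W b" using d False False2 DmD gen_SS by auto
        hence "cm (gen d1) (gen d2) \<in> CC b" by simp
        moreover have "cm (gen d1) (gen d2) \<in> CC c" using d gen_SS by simp
        moreover have "cm (gen d1) (gen d2) \<in> SS (D c - {b})"
        proof -
          have "D c - {b} \<subseteq> X" using D_X by auto
          thus ?thesis using s by (simp add: cm_def)
        qed
        ultimately show ?thesis using C1[OF bZ cZ bc cb g, of "\<one>\<^bsub>G\<^esub>"] gc by simp
      qed
    qed
  qed
qed

end


context raag begin

definition PQ :: "('v word set \<Rightarrow> 'v word set) \<Rightarrow> 'v \<Rightarrow> bool" where
  "PQ f c \<longleftrightarrow> (\<forall>d\<in>D c. MM c (inv\<^bsub>G\<^esub> gen d) (gen d) \<in> Tset f) \<and>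
         (\<forall>d1\<in>D c. \<forall>d2\<in>D c. MM c \<one>\<^bsub>G\<^esub> (cm (gen d1) (gen d2)) \<in> Tset f)"

lemma PQ_kappa: assumes "\<kappa> \<in> KK" "f \<in> carrier Au" "PQ f c" shows "PQ (\<kappa> \<otimes>\<^bsub>Au\<^esub> f) c"
  using assms T_kappa unfolding PQ_def by blast

lemma K_T_trans: assumes bZ: "fst b \<in> Z" and av: "fst a \<in> D (fst b)"
  shows "KK \<subseteq> Tset (transvection X E a b)"
proof -
  define bv where "bv = fst b"
  define g where "g = lt a"
  have X: "bv \<in> X" "fst a \<in> X" using bZ av cX DX by (auto simp: bv_def)
  have gS: "g \<in> SS {fst a}" using gen_SS[of "fst a" "{fst a}"] X by (auto simp: g_def lt_def)
  have gW: "g \<in> W bv" using gS av avW by (simp add: bv_def)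
  define p0 where "p0 = (if snd b then inv\<^bsub>G\<^esub> g else \<one>\<^bsub>G\<^esub>)"
  define q0 where "q0 = (if snd b then \<one>\<^bsub>G\<^esub> else g)"
  have pq0: "p0 \<in> SS {fst a}" "q0 \<in> SS {fst a}" using gS X by (auto simp: p0_def q0_def)
  have pq0W: "p0 \<in> W bv" "q0 \<in> W bv" using pq0 av avW by (auto simp: bv_def)
  have tr: "transvection X E a b = MM bv p0 q0"
    using transvection_M[OF bZ av] by (simp add: p0_def q0_def bv_def g_def)
  have fc: "MM bv p0 q0 \<in> carrier Au" using X pq0W by simp
  have "\<And>c. c \<in> Z \<Longrightarrow> PQ (MM bv p0 q0) c"
  proof -
    fix c assume cZ: "c \<in> Z"
    have cXX: "c \<in> X" using cZ cX by simp
    consider "c = bv" | "c \<noteq> bv" "fst a \<noteq> c" | "c \<noteq> bv" "fst a = c"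
      by blast
    thus "PQ (MM bv p0 q0) c"
    proof cases
      case 1
      have w: "p0 \<in> W c" "q0 \<in> W c" using pq0W 1 by auto
      show ?thesis unfolding PQ_def
      proof (intro conjI ballI)
        fix d assume d: "d \<in> D c"
        have "gen d \<in> W c" using d gen_SS by simp
        thus "MM c (inv\<^bsub>G\<^esub> gen d) (gen d) \<in> Tset (MM bv p0 q0)"
          using caseA[OF cZ w, of "inv\<^bsub>G\<^esub> gen d" "gen d"] 1 by simp
      next
        fix d1 d2 assume d: "d1 \<in> D c" "d2 \<in> D c"
        have "gen d1 \<in> W c" "gen d2 \<in> W c" using d gen_SS by auto
        thus "MM c \<one>\<^bsub>G\<^esub> (cm (gen d1) (gen d2)) \<in> Tset (MM bv p0 q0)"
          using caseA[OF cZ w, of "\<one>\<^bsub>G\<^esub>" "cm (gen d1) (gen d2)"] 1 by simp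
      qed
    next
      case 2
      show ?thesis unfolding PQ_def
        using PQ_B[OF bZ[folded bv_def] cZ not_sym[OF 2(1)] av[folded bv_def] 2(2) pq0] .
    next
      case 3
      have cb: "c \<in> D bv" using av 3 by (simp add: bv_def)
      have gc: "g = gen c \<or> g = inv\<^bsub>G\<^esub> gen c" using 3 by (auto simp: g_def lt_def)
      show ?thesis
      proof (cases "snd b")
        case False
        hence "MM bv p0 q0 = MM bv \<one>\<^bsub>G\<^esub> g" by (simp add: p0_def q0_def)
        thus ?thesis unfolding PQ_def using PQ_C[OF bZ[folded bv_def] cZ not_sym[OF 3(1)] cb gc] by simp
      next
        case True
        have gc': "inv\<^bsub>G\<^esub> g = gen c \<or> inv\<^bsub>G\<^esub> g = inv\<^bsub>G\<^esub> gen c" using gc cXX by auto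
        have igW: "inv\<^bsub>G\<^esub> g \<in> W bv" using gW by simp
        have e: "MM bv p0 q0 = MM bv (inv\<^bsub>G\<^esub> g) g \<otimes>\<^bsub>Au\<^esub> MM bv \<one>\<^bsub>G\<^esub> (inv\<^bsub>G\<^esub> g)"
          using True M_mult[OF X(1) igW gW] gW igW by (simp add: p0_def q0_def)
        have kap: "MM bv (inv\<^bsub>G\<^esub> g) g \<in> KK" using K_crit[OF bZ[folded bv_def] igW gW] gW by simp
        have "PQ (MM bv \<one>\<^bsub>G\<^esub> (inv\<^bsub>G\<^esub> g)) c"
          unfolding PQ_def using PQ_C[OF bZ[folded bv_def] cZ not_sym[OF 3(1)] cb gc'] .
        thus ?thesis using PQ_kappa[OF kap _ ] e X igW by simp
      qed
    qed
  qed
  hence "KK \<subseteq> Tset (MM bv p0 q0)" using K_in_T[OF fc] unfolding PQ_def by blast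
  thus ?thesis using tr by simp
qed

end


context raag begin

lemma GG_form: assumes "f \<in> G_gens X E Z"
  shows "(\<exists>g\<in>carrier G. f = inner g) \<or> (\<exists>a b. fst b \<in> Z \<and> fst a \<in> D (fst b) \<and> f = transvection X E a b)"
proof -
  consider (t) a b where "a \<in> letters Z" "b \<in> letters Z" "dominates X E (fst a) (fst b)" "fst a \<noteq> fst b"
      "f = transvection X E a b"
    | (i) "f \<in> inner_auts X E"
    using assms unfolding G_gens_def by blast
  thus ?thesis
  proof cases
    case t
    have "fst b \<in> Z" "fst a \<in> D (fst b)" using t by (auto simp: letters_iff D_iff)
    thus ?thesis using t(5) by blast
  next
    case i thus ?thesis by (auto simp: inner_auts_eq)
  qed
qed

lemma trans_carrier: "fst b \<in> Z \<Longrightarrow> fst a \<in> D (fst b) \<Longrightarrow> transvection X E a b \<in> carrier Au"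
  using transvection_M[of b a] lt_W[of a "fst b"] cX by auto

lemma Ggens_carrier: "G_gens X E Z \<subseteq> carrier Au"
  using GG_form inner_Aut trans_carrier by blast

lemma G_subgroup: "subgroup GG Au"
  unfolding G_Z_def by (rule B.generate_is_subgroup[OF Ggens_carrier])

lemma Ggens_GG: "f \<in> G_gens X E Z \<Longrightarrow> f \<in> GG" unfolding G_Z_def by (rule generate.incl)

lemma inner_inv: assumes "g \<in> carrier G" shows "inv\<^bsub>Au\<^esub> (inner g) = inner (inv\<^bsub>G\<^esub> g)"
proof (rule B.inv_equality)
  show "inner g \<in> carrier Au" "inner (inv\<^bsub>G\<^esub> g) \<in> carrier Au" using inner_Aut assms by auto
  show "inner (inv\<^bsub>G\<^esub> g) \<otimes>\<^bsub>Au\<^esub> inner g = \<one>\<^bsub>Au\<^esub>"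
  proof (rule Aut_eq)
    have c: "inner g \<in> carrier Au" "inner (inv\<^bsub>G\<^esub> g) \<in> carrier Au" using inner_Aut assms by auto
    show "inner (inv\<^bsub>G\<^esub> g) \<otimes>\<^bsub>Au\<^esub> inner g \<in> carrier Au" using c by simp
    show "\<one>\<^bsub>Au\<^esub> \<in> carrier Au" by (rule B.one_closed)
    show "\<forall>v\<in>X. (inner (inv\<^bsub>G\<^esub> g) \<otimes>\<^bsub>Au\<^esub> inner g) (gen v) = \<one>\<^bsub>Au\<^esub> (gen v)"
    proof
      fix v assume v: "v \<in> X"
      have "(inner (inv\<^bsub>G\<^esub> g) \<otimes>\<^bsub>Au\<^esub> inner g) (gen v) = inner (inv\<^bsub>G\<^esub> g) (inner g (gen v))"
        using c v by (simp add: app_mult)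
      also have "\<dots> = gen v" using assms v by (simp add: inner_def A.gs)
      finally show "(inner (inv\<^bsub>G\<^esub> g) \<otimes>\<^bsub>Au\<^esub> inner g) (gen v) = \<one>\<^bsub>Au\<^esub> (gen v)"
        using v by (simp add: one_Aut)
    qed
  qed
qed

lemma trans_gen: assumes "fst b \<in> Z" "fst a \<in> D (fst b)" shows "transvection X E a b \<in> G_gens X E Z"
proof -
  have "a \<in> letters Z" "b \<in> letters Z" "dominates X E (fst a) (fst b)" "fst a \<noteq> fst b"
    using assms by (auto simp: letters_iff D_iff)
  thus ?thesis unfolding G_gens_def by blast
qed

lemma Ggens_inv: assumes "f \<in> G_gens X E Z" shows "inv\<^bsub>Au\<^esub> f \<in> G_gens X E Z"
  using GG_form[OF assms]
proof
  assume "\<exists>g\<in>carrier G. f = inner g"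
  then obtain g where g: "g \<in> carrier G" "f = inner g" by blast
  thus ?thesis using inner_inv[OF g(1)] by (auto simp: G_gens_def inner_auts_eq)
next
  assume "\<exists>a b. fst b \<in> Z \<and> fst a \<in> D (fst b) \<and> f = transvection X E a b"
  then obtain a b where ab: "fst b \<in> Z" "fst a \<in> D (fst b)" "f = transvection X E a b" by blast
  have X: "fst b \<in> X" "fst a \<in> X" using ab cX DX by auto
  have w: "lt a \<in> W (fst b)" using ab lt_W by auto
  have ab': "fst (inv_letter a) \<in> D (fst b)" using ab by simp
  have "inv\<^bsub>Au\<^esub> f = transvection X E (inv_letter a) b"
    using transvection_M[OF ab(1,2)] transvection_M[OF ab(1) ab'] ab(3) M_Aut(2)[OF X(1)] w X
    by (simp add: lt_inv_letter)
  thus ?thesis using trans_gen[OF ab(1) ab'] by simp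
qed

lemma Ggens_T: assumes "f \<in> G_gens X E Z" shows "KK \<subseteq> Tset f"
  using GG_form[OF assms]
proof
  assume "\<exists>g\<in>carrier G. f = inner g"
  then obtain g where g: "g \<in> carrier G" "f = inner g" by blast
  have fK: "f \<in> KK" using inner_K g by simp
  show ?thesis
  proof
    fix k assume k: "k \<in> KK"
    have "f \<otimes>\<^bsub>Au\<^esub> k \<otimes>\<^bsub>Au\<^esub> inv\<^bsub>Au\<^esub> f \<in> KK"
      using fK k subgroup.m_closed[OF K_subgroup] subgroup.m_inv_closed[OF K_subgroup] by blast
    thus "k \<in> Tset f" using k K_carrier by (simp add: Tset_def)
  qed
next
  assume "\<exists>a b. fst b \<in> Z \<and> fst a \<in> D (fst b) \<and> f = transvection X E a b"
  thus ?thesis using K_T_trans by blast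
qed

lemma T_mult: assumes "f1 \<in> carrier Au" "f2 \<in> carrier Au" "KK \<subseteq> Tset f1" "KK \<subseteq> Tset f2"
  shows "KK \<subseteq> Tset (f1 \<otimes>\<^bsub>Au\<^esub> f2)"
proof
  fix k assume k: "k \<in> KK"
  have kc: "k \<in> carrier Au" using K_carrier k by blast
  have 1: "f2 \<otimes>\<^bsub>Au\<^esub> k \<otimes>\<^bsub>Au\<^esub> inv\<^bsub>Au\<^esub> f2 \<in> KK" using assms(4) k by (auto simp: Tset_def)
  hence "f1 \<otimes>\<^bsub>Au\<^esub> (f2 \<otimes>\<^bsub>Au\<^esub> k \<otimes>\<^bsub>Au\<^esub> inv\<^bsub>Au\<^esub> f2) \<otimes>\<^bsub>Au\<^esub> inv\<^bsub>Au\<^esub> f1 \<in> KK" using assms(3) by (auto simp: Tset_def)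
  moreover have "f1 \<otimes>\<^bsub>Au\<^esub> (f2 \<otimes>\<^bsub>Au\<^esub> k \<otimes>\<^bsub>Au\<^esub> inv\<^bsub>Au\<^esub> f2) \<otimes>\<^bsub>Au\<^esub> inv\<^bsub>Au\<^esub> f1
    = f1 \<otimes>\<^bsub>Au\<^esub> f2 \<otimes>\<^bsub>Au\<^esub> k \<otimes>\<^bsub>Au\<^esub> inv\<^bsub>Au\<^esub> (f1 \<otimes>\<^bsub>Au\<^esub> f2)" using assms kc by (simp add: B.gs)
  ultimately show "k \<in> Tset (f1 \<otimes>\<^bsub>Au\<^esub> f2)" using kc by (simp add: Tset_def)
qed

lemma T_one: "KK \<subseteq> Tset \<one>\<^bsub>Au\<^esub>"
  using K_carrier by (auto simp: Tset_def)

lemma GG_T: "f \<in> GG \<Longrightarrow> KK \<subseteq> Tset f"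
proof -
  define N where "N = {f \<in> carrier Au. KK \<subseteq> Tset f \<and> KK \<subseteq> Tset (inv\<^bsub>Au\<^esub> f)}"
  have "subgroup N Au"
  proof (rule B.subgroupI)
    show "N \<subseteq> carrier Au" by (auto simp: N_def)
    have "\<one>\<^bsub>Au\<^esub> \<in> N" using T_one by (simp add: N_def)
    thus "N \<noteq> {}" by blast
  next
    fix f assume "f \<in> N" thus "inv\<^bsub>Au\<^esub> f \<in> N" by (auto simp: N_def)
  next
    fix f1 f2 assume f: "f1 \<in> N" "f2 \<in> N"
    hence c: "f1 \<in> carrier Au" "f2 \<in> carrier Au" by (auto simp: N_def)
    have "KK \<subseteq> Tset (f1 \<otimes>\<^bsub>Au\<^esub> f2)" using T_mult c f by (auto simp: N_def)
    moreover have "KK \<subseteq> Tset (inv\<^bsub>Au\<^esub> f2 \<otimes>\<^bsub>Au\<^esub> inv\<^bsub>Au\<^esub> f1)" using T_mult c f by (auto simp: N_def)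
    ultimately show "f1 \<otimes>\<^bsub>Au\<^esub> f2 \<in> N" using c by (simp add: N_def B.inv_mult_group)
  qed
  moreover have "G_gens X E Z \<subseteq> N"
    using Ggens_carrier Ggens_T Ggens_inv by (auto simp: N_def)
  ultimately have "GG \<subseteq> N" unfolding G_Z_def by (rule B.generate_subgroup_incl[rotated])
  thus "f \<in> GG \<Longrightarrow> KK \<subseteq> Tset f" by (auto simp: N_def)
qed

lemma tr_one_l: "c \<in> Z \<Longrightarrow> fst l \<in> D c \<Longrightarrow> MM c \<one>\<^bsub>G\<^esub> (lt l) \<in> GG"
  using Ggens_GG[OF trans_gen[of "(c, False)" l]] transvection_M[of "(c, False)" l] by simp

lemma tr_one_r: "c \<in> Z \<Longrightarrow> fst l \<in> D c \<Longrightarrow> MM c (inv\<^bsub>G\<^esub> (lt l)) \<one>\<^bsub>G\<^esub> \<in> GG"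
  using Ggens_GG[OF trans_gen[of "(c, True)" l]] transvection_M[of "(c, True)" l] by simp

lemma GG_m: "f \<in> GG \<Longrightarrow> h \<in> GG \<Longrightarrow> f \<otimes>\<^bsub>Au\<^esub> h \<in> GG"
  by (rule subgroup.m_closed[OF G_subgroup])

lemma K_GG: "KK \<subseteq> GG"
  unfolding K_Z_def
proof (rule B.generate_subgroup_incl[OF _ G_subgroup], rule subsetI)
  fix k assume "k \<in> K_gens X E Z"
  then consider (comm) x y c where "x \<in> letters Z" "y \<in> letters Z" "c \<in> letters Z"
      "dominates X E (fst x) (fst c)" "dominates X E (fst y) (fst c)"
      "fst x \<noteq> fst y" "fst x \<noteq> fst c" "fst y \<noteq> fst c" "k = comm_transvection X E x y c"
    | (pc) x c where "x \<in> letters Z" "c \<in> letters Z" "dominates X E (fst x) (fst c)" "fst x \<noteq> fst c"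
      "k = pconj X E x c"
    | (inn) "k \<in> inner_auts X E"
    unfolding K_gens_def by blast
  thus "k \<in> GG"
  proof cases
    case inn thus ?thesis using Ggens_GG by (auto simp: G_gens_def)
  next
    case pc
    have d: "fst c \<in> Z" "fst x \<in> D (fst c)" using pc by (auto simp: letters_iff D_iff)
    have X: "fst c \<in> X" "fst x \<in> X" using d cX DX by auto
    have w: "lt x \<in> W (fst c)" using d lt_W by auto
    have "MM (fst c) (inv\<^bsub>G\<^esub> (lt x)) \<one>\<^bsub>G\<^esub> \<otimes>\<^bsub>Au\<^esub> MM (fst c) \<one>\<^bsub>G\<^esub> (lt x) = MM (fst c) (inv\<^bsub>G\<^esub> (lt x)) (lt x)"
      using M_mult[OF X(1)] w by simp
    thus ?thesis using pconj_M[OF d] pc GG_m[OF tr_one_r[OF d] tr_one_l[OF d]] by simp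
  next
    case comm
    have d: "fst c \<in> Z" "fst x \<in> D (fst c)" "fst y \<in> D (fst c)" using comm by (auto simp: letters_iff D_iff)
    have d': "fst (inv_letter x) \<in> D (fst c)" "fst (inv_letter y) \<in> D (fst c)" using d by auto
    have X: "fst c \<in> X" "fst x \<in> X" "fst y \<in> X" using d cX DX by auto
    have w: "lt x \<in> W (fst c)" "lt y \<in> W (fst c)" using d lt_W by auto
    have ix: "lt (inv_letter x) = inv\<^bsub>G\<^esub> lt x" "lt (inv_letter y) = inv\<^bsub>G\<^esub> lt y" using X lt_inv_letter by auto
    show ?thesis
    proof (cases "snd c")
      case True
      have "MM (fst c) (inv\<^bsub>G\<^esub> (lt (inv_letter x))) \<one>\<^bsub>G\<^esub> \<otimes>\<^bsub>Au\<^esub> MM (fst c) (inv\<^bsub>G\<^esub> (lt (inv_letter y))) \<one>\<^bsub>G\<^esub>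
         \<otimes>\<^bsub>Au\<^esub> MM (fst c) (inv\<^bsub>G\<^esub> (lt x)) \<one>\<^bsub>G\<^esub> \<otimes>\<^bsub>Au\<^esub> MM (fst c) (inv\<^bsub>G\<^esub> (lt y)) \<one>\<^bsub>G\<^esub>
         = MM (fst c) (cm (lt y) (lt x)) \<one>\<^bsub>G\<^esub>"
        using M_mult[OF X(1)] w ix by (simp add: cm_def A.gs)
      moreover have "MM (fst c) (inv\<^bsub>G\<^esub> (lt (inv_letter x))) \<one>\<^bsub>G\<^esub> \<otimes>\<^bsub>Au\<^esub> MM (fst c) (inv\<^bsub>G\<^esub> (lt (inv_letter y))) \<one>\<^bsub>G\<^esub>
         \<otimes>\<^bsub>Au\<^esub> MM (fst c) (inv\<^bsub>G\<^esub> (lt x)) \<one>\<^bsub>G\<^esub> \<otimes>\<^bsub>Au\<^esub> MM (fst c) (inv\<^bsub>G\<^esub> (lt y)) \<one>\<^bsub>G\<^esub> \<in> GG"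
        using GG_m tr_one_r[OF d(1)] d d' by meson
      ultimately show ?thesis using comm_M[OF d] comm True by simp
    next
      case False
      have "MM (fst c) \<one>\<^bsub>G\<^esub> (lt (inv_letter x)) \<otimes>\<^bsub>Au\<^esub> MM (fst c) \<one>\<^bsub>G\<^esub> (lt (inv_letter y))
         \<otimes>\<^bsub>Au\<^esub> MM (fst c) \<one>\<^bsub>G\<^esub> (lt x) \<otimes>\<^bsub>Au\<^esub> MM (fst c) \<one>\<^bsub>G\<^esub> (lt y)
         = MM (fst c) \<one>\<^bsub>G\<^esub> (cm (lt x) (lt y))"
        using M_mult[OF X(1)] w ix by (simp add: cm_def A.gs)
      moreover have "MM (fst c) \<one>\<^bsub>G\<^esub> (lt (inv_letter x)) \<otimes>\<^bsub>Au\<^esub> MM (fst c) \<one>\<^bsub>G\<^esub> (lt (inv_letter y))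
         \<otimes>\<^bsub>Au\<^esub> MM (fst c) \<one>\<^bsub>G\<^esub> (lt x) \<otimes>\<^bsub>Au\<^esub> MM (fst c) \<one>\<^bsub>G\<^esub> (lt y) \<in> GG"
        using GG_m tr_one_l[OF d(1)] d d' by meson
      ultimately show ?thesis using comm_M[OF d] comm False by simp
    qed
  qed
qed

theorem main: "KK \<lhd> Au\<lparr>carrier := GG\<rparr>"
proof -
  interpret H: group "Au\<lparr>carrier := GG\<rparr>" by (rule subgroup.subgroup_is_group[OF G_subgroup B.is_group])
  show ?thesis unfolding H.normal_inv_iff
  proof (intro conjI ballI)
    show "subgroup KK (Au\<lparr>carrier := GG\<rparr>)" by (rule B.subgroup_incl[OF K_subgroup G_subgroup K_GG])
  next
    fix x h assume x: "x \<in> carrier (Au\<lparr>carrier := GG\<rparr>)" and h: "h \<in> KK"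
    have xG: "x \<in> GG" using x by simp
    have "inv\<^bsub>Au\<lparr>carrier := GG\<rparr>\<^esub> x = inv\<^bsub>Au\<^esub> x" using B.m_inv_consistent[OF G_subgroup xG] .
    moreover have "h \<in> Tset x" using GG_T[OF xG] h by blast
    ultimately show "x \<otimes>\<^bsub>Au\<lparr>carrier := GG\<rparr>\<^esub> h \<otimes>\<^bsub>Au\<lparr>carrier := GG\<rparr>\<^esub> inv\<^bsub>Au\<lparr>carrier := GG\<rparr>\<^esub> x \<in> KK"
      by (simp add: Tset_def)
  qed
qed

end

theorem lemma3p4:
  fixes X :: "'v set" and E :: "'v \<Rightarrow> 'v \<Rightarrow> bool" and Z :: "'v set"
  assumes "finite X"
    and "\<And>x y. E x y \<Longrightarrow> x \<in> X \<and> y \<in> X"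
    and "\<And>x y. E x y \<Longrightarrow> E y x"
    and "\<And>x. \<not> E x x"
    and "Z \<subseteq> X"
  shows "K_Z X E Z \<lhd> (Aut X E)\<lparr>carrier := G_Z X E Z\<rparr>"
proof -
  interpret raag X E Z using assms by (unfold_locales) auto
  show ?thesis by (rule main)
qed


end
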